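(* Let $f$, $g$, $\xi$, $F$ satisfy the standing assumptions below, and let $x$ be the unique continuous solution of $x'(t)=-f(x(t))+g(t)$, $t>0$, $x(0)=\xi$. Suppose that $f\in\mathrm{RV}_0(\beta)$ for some $\beta>1$, that $g\in\mathrm{RV}_\infty(-\theta)$ for some $\theta>0$, that $x(t)\to0$ as $t\to\infty$, and that \[ \lim_{t\to\infty}\frac{g(t)}{f(F^{-1}(t))}=L\in[0,\infty]. \] (i) If $L=0$, then $\lim_{t\to\infty}F(x(t))/t=1$. (ii) If $L\in(0,\infty)$, then $\lim_{t\to\infty}F(x(t))/t=\Lambda_*$, where $\Lambda_*\in(0,1)$ is the unique solution of $(1-\Lambda_* )\Lambda_*^{-\beta/(\beta-1)}=L$. (iii) If $L=\infty$, then $\lim_{t\to\infty}f(x(t))/g(t)=1$.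
   Context: Standing assumptions: $f\in C(\mathbb{R};\mathbb{R})$ is locally Lipschitz continuous on $\mathbb{R}$, $f(0)=0$ and $xf(x)>0$ for $x\neq0$; $g\in C([0,\infty);\mathbb{R})$ with $g(t)>0$ for $t>0$; $\xi>0$. $F(x)=\int_x^1 \frac{du}{f(u)}$ for $x>0$ (which tends to $+\infty$ as $x\to0^+$ since $f\in\mathrm{RV}_0(\beta)$ with $\beta>1$); $F^{-1}$ is the inverse of the strictly decreasing function $F$. $\mathrm{RV}_0(\beta)$: measurable positive $\varphi$ on $(0,\infty)$ with $\varphi(\lambda x)/\varphi(x)\to\lambda^\beta$ as $x\to0^+$ for every $\lambda>0$. $\mathrm{RV}_\infty(\alpha)$: measurable positive $h$ with $h(\lambda t)/h(t)\to\lambda^\alpha$ as $t\to\infty$ for every $\lambda>0$. *)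

theory Defs
  imports "HOL-Analysis.Analysis"
begin

definition Fint :: "(real \<Rightarrow> real) \<Rightarrow> real \<Rightarrow> real" where
  "Fint f y = (if y \<le> 1 then integral {y..1} (\<lambda>u. 1 / f u)
               else - integral {1..y} (\<lambda>u. 1 / f u))"

definition Finv :: "(real \<Rightarrow> real) \<Rightarrow> real \<Rightarrow> real" where
  "Finv f t = (THE y. y > 0 \<and> Fint f y = t)"

definition RV0 :: "real \<Rightarrow> (real \<Rightarrow> real) \<Rightarrow> bool" where
  "RV0 \<beta> \<phi> \<longleftrightarrow> (\<forall>y>0. \<phi> y > 0) \<and> set_borel_measurable borel {0<..} \<phi> \<and>
     (\<forall>c>0. ((\<lambda>y. \<phi> (c * y) / \<phi> y) \<longlongrightarrow> c powr \<beta>) (at_right 0))"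

definition RVinf :: "real \<Rightarrow> (real \<Rightarrow> real) \<Rightarrow> bool" where
  "RVinf \<alpha> h \<longleftrightarrow> (\<forall>t>0. h t > 0) \<and> set_borel_measurable borel {0<..} h \<and>
     (\<forall>c>0. ((\<lambda>t. h (c * t) / h t) \<longlongrightarrow> c powr \<alpha>) at_top)"

end

theory Submission
  imports Defs
begin

lemma uct_local:
  fixes k :: "real \<Rightarrow> real"
  assumes kc: "continuous_on UNIV k"
    and lim: "\<And>v. ((\<lambda>x. k (x + v) - k x) \<longlongrightarrow> 0) at_top"
    and eps: "\<epsilon> > 0"
  shows "\<exists>\<delta>>0. \<exists>X. \<forall>x\<ge>X. \<forall>v. \<bar>v\<bar> < \<delta> \<longrightarrow> \<bar>k (x + v) - k x\<bar> < \<epsilon>"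
proof -
  define \<eta> where "\<eta> = \<epsilon>/3"
  have eta: "\<eta> > 0" using eps by (simp add: \<eta>_def)
  define E where "E n = {v\<in>{0..1}. \<forall>x\<ge>real n. \<bar>k (x + v) - k x\<bar> \<le> \<eta>}" for n :: nat
  have closedE: "closed (E n)" for n
  proof -
    have "E n = {0..1} \<inter> (\<Inter>x\<in>{real n..}. {v. \<bar>k (x + v) - k x\<bar> \<le> \<eta>})"
      unfolding E_def by auto
    moreover have "closed {v. \<bar>k (x + v) - k x\<bar> \<le> \<eta>}" for x
      by (intro closed_Collect_le continuous_intros continuous_on_compose2[OF kc]) auto
    ultimately show ?thesis by (simp add: closed_INT closed_Int)
  qed
  have cover: "{0..1} \<subseteq> (\<Union>n. E n)"
  proof
    fix v :: real assume v: "v \<in> {0..1}"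
    have "eventually (\<lambda>x. dist (k (x + v) - k x) 0 < \<eta>) at_top"
      using lim[of v] eta unfolding tendsto_iff by blast
    then obtain N where N: "\<forall>x\<ge>N. \<bar>k (x + v) - k x\<bar> < \<eta>"
      by (auto simp: eventually_at_top_linorder dist_real_def)
    obtain n :: nat where "N \<le> real n" using real_arch_simple by blast
    hence "v \<in> E n" using N v unfolding E_def by (auto intro: less_imp_le)
    thus "v \<in> (\<Union>n. E n)" by blast
  qed
  have "\<exists>n. interior (E n) \<noteq> {}"
  proof (rule ccontr)
    assume "\<not> ?thesis"
    hence "euclidean interior_of (\<Union>(range E)) = {}"
      by (intro Baire_category_alt) (auto simp: completely_metrizable_space_euclidean closedE)
    moreover have "{0<..<1} \<subseteq> interior (\<Union>(range E))"
      using cover by (intro interior_maximal) auto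
    moreover have "(1/2::real) \<in> {0<..<1}" by simp
    ultimately show False by auto
  qed
  then obtain n v0 where "v0 \<in> interior (E n)" by blast
  then obtain r where r: "r > 0" "ball v0 r \<subseteq> E n" by (auto simp: mem_interior)
  have v0E: "v0 \<in> E n" using r by auto
  have key: "\<forall>x\<ge>real n + 1. \<forall>v. \<bar>v\<bar> < min r 1 \<longrightarrow> \<bar>k (x + v) - k x\<bar> < \<epsilon>"
    proof (intro allI impI)
    fix x v :: real assume x: "real n + 1 \<le> x" and v: "\<bar>v\<bar> < min r 1"
    have "v0 - v \<in> ball v0 r" using v by (auto simp: dist_real_def)
    hence "v0 - v \<in> E n" using r by blast
    moreover have "x + v \<ge> real n" using x v by auto
    ultimately have h1: "\<bar>k ((x + v) + (v0 - v)) - k (x + v)\<bar> \<le> \<eta>" unfolding E_def by blast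
    have h2: "\<bar>k (x + v0) - k x\<bar> \<le> \<eta>" using v0E x unfolding E_def by auto
    have "(x + v) + (v0 - v) = x + v0" by simp
    with h1 have hh: "\<bar>k (x + v0) - k (x + v)\<bar> \<le> \<eta>" by auto
    show "\<bar>k (x + v) - k x\<bar> < \<epsilon>" using hh h2 eps \<eta>_def by linarith
  qed
  show ?thesis using key r by (intro exI[of _ "min r 1"]) auto
qed

lemma uct_compact:
  fixes k :: "real \<Rightarrow> real"
  assumes kc: "continuous_on UNIV k"
    and lim: "\<And>v. ((\<lambda>x. k (x + v) - k x) \<longlongrightarrow> 0) at_top"
    and eps: "\<epsilon> > 0"
  shows "\<exists>X. \<forall>x\<ge>X. \<forall>v. \<bar>v\<bar> \<le> V \<longrightarrow> \<bar>k (x + v) - k x\<bar> < \<epsilon>"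
proof -
  obtain \<delta> X0 where d: "\<delta> > 0" and X0: "\<forall>x\<ge>X0. \<forall>v. \<bar>v\<bar> < \<delta> \<longrightarrow> \<bar>k (x + v) - k x\<bar> < \<epsilon>/2"
    using uct_local[OF kc lim, of "\<epsilon>/2"] eps by auto
  define N where "N = \<lceil>2 * \<bar>V\<bar> / \<delta>\<rceil>"
  have "eventually (\<lambda>x. \<forall>j\<in>{-N..N}. \<bar>k (x + of_int j * (\<delta>/2)) - k x\<bar> < \<epsilon>/2) at_top"
  proof (intro eventually_ball_finite ballI)
    fix j assume "j \<in> {-N..N}"
    show "eventually (\<lambda>x. \<bar>k (x + of_int j * (\<delta>/2)) - k x\<bar> < \<epsilon>/2) at_top"
      using lim[of "of_int j * (\<delta>/2)", unfolded tendsto_iff dist_real_def, rule_format, of "\<epsilon>/2"] eps by simp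
  qed auto
  then obtain X1 where X1: "\<forall>x\<ge>X1. \<forall>j\<in>{-N..N}. \<bar>k (x + of_int j * (\<delta>/2)) - k x\<bar> < \<epsilon>/2"
    by (auto simp: eventually_at_top_linorder)
  show ?thesis
  proof (intro exI[of _ "max X1 (X0 + \<bar>V\<bar> + \<delta>)"] allI impI)
    fix x v assume x: "max X1 (X0 + \<bar>V\<bar> + \<delta>) \<le> x" and v: "\<bar>v\<bar> \<le> V"
    define j where "j = \<lfloor>v / (\<delta>/2)\<rfloor>"
    have j1: "of_int j * (\<delta>/2) \<le> v" unfolding j_def using d
      by (metis divide_pos_pos floor_divide_lower zero_less_numeral)
    have j2: "v < (of_int j + 1) * (\<delta>/2)" unfolding j_def using d
      by (metis divide_pos_pos floor_divide_upper zero_less_numeral)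
    have jv: "of_int j \<le> v / (\<delta>/2)" "v / (\<delta>/2) < of_int j + 1" unfolding j_def by linarith+
    have Nv: "2 * \<bar>V\<bar> / \<delta> \<le> of_int N" unfolding N_def by (rule le_of_int_ceiling)
    have vv: "v / (\<delta>/2) \<le> 2 * \<bar>V\<bar> / \<delta>" "- (2 * \<bar>V\<bar> / \<delta>) \<le> v / (\<delta>/2)"
      using v d by (auto simp: field_simps)
    have "of_int j \<le> (of_int N :: real)" using jv vv Nv by linarith
    hence "j \<le> N" by simp
    moreover have "of_int (-N) < (of_int j + 1 :: real)" using jv vv Nv by simp
    hence "-N \<le> j" by linarith
    ultimately have jN: "j \<in> {-N..N}" by auto
    define w where "w = of_int j * (\<delta>/2)"
    have a: "\<bar>k (x + w) - k x\<bar> < \<epsilon>/2" using X1 x jN unfolding w_def by auto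
    have "x + w \<ge> X0" using j1 j2 v x d unfolding w_def by (auto simp: algebra_simps)
    moreover have "\<bar>v - w\<bar> < \<delta>" using j1 j2 d unfolding w_def by (auto simp: algebra_simps)
    ultimately have b: "\<bar>k ((x + w) + (v - w)) - k (x + w)\<bar> < \<epsilon>/2" using X0 by blast
    have "(x + w) + (v - w) = x + v" by simp
    with b have "\<bar>k (x + v) - k (x + w)\<bar> < \<epsilon>/2" by simp
    with a show "\<bar>k (x + v) - k x\<bar> < \<epsilon>" by linarith
  qed
qed


locale rvf =
  fixes f :: "real \<Rightarrow> real" and \<beta> :: real
  assumes fc: "continuous_on {0<..} f"
    and fpos: "\<And>y. y > 0 \<Longrightarrow> f y > 0"
    and frv: "\<And>c. c > 0 \<Longrightarrow> ((\<lambda>y. f (c * y) / f y) \<longlongrightarrow> c powr \<beta>) (at_right 0)"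
    and beta: "\<beta> > 1"
begin

definition kf :: "real \<Rightarrow> real" where "kf x = ln (f (exp (- x))) + \<beta> * x"

lemma kf_cont: "continuous_on UNIV kf"
proof -
  have "continuous_on UNIV (\<lambda>x. f (exp (- x)))"
    by (rule continuous_on_compose2[OF fc]) (auto intro!: continuous_intros)
  moreover have "\<And>x. f (exp (- x)) \<noteq> 0" using fpos by (metis exp_gt_zero less_irrefl)
  ultimately show ?thesis unfolding kf_def
    by (auto intro!: continuous_intros continuous_on_ln)
qed

lemma exp_neg_at_right: "filterlim (\<lambda>x::real. exp (- x)) (at_right 0) at_top"
proof -
  have "((\<lambda>x::real. exp (- x)) \<longlongrightarrow> 0) at_top"
    by (rule filterlim_compose[OF exp_at_bot filterlim_uminus_at_bot_at_top])
  thus ?thesis unfolding filterlim_at by (auto simp: eventually_at_top_linorder)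
qed

lemma kf_lim: "((\<lambda>x. kf (x + v) - kf x) \<longlongrightarrow> 0) at_top"
proof -
  have eq: "kf (x + v) - kf x = ln (f (exp (- v) * exp (- x)) / f (exp (- x))) + \<beta> * v" for x
  proof -
    have "exp (- (x + v)) = exp (- v) * exp (- x)" by (simp add: exp_add[symmetric])
    moreover have "f (exp (- v) * exp (- x)) > 0" "f (exp (- x)) > 0" using fpos by auto
    ultimately show ?thesis unfolding kf_def by (simp add: ln_div algebra_simps)
  qed
  have "((\<lambda>y. f (exp (- v) * y) / f y) \<longlongrightarrow> exp (- v) powr \<beta>) (at_right 0)"
    by (rule frv) simp
  hence "((\<lambda>x. f (exp (- v) * exp (- x)) / f (exp (- x))) \<longlongrightarrow> exp (- v) powr \<beta>) at_top"
    by (rule filterlim_compose[OF _ exp_neg_at_right])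
  hence "((\<lambda>x. ln (f (exp (- v) * exp (- x)) / f (exp (- x))) + \<beta> * v) \<longlongrightarrow> ln (exp (- v) powr \<beta>) + \<beta> * v) at_top"
    by (intro tendsto_intros) auto
  moreover have "ln (exp (- v) powr \<beta>) + \<beta> * v = 0" by (simp add: powr_def)
  ultimately show ?thesis using eq by simp
qed

lemma f_scale: "y > 0 \<Longrightarrow> s > 0 \<Longrightarrow> f (s * y) = f y * exp (kf (- ln y - ln s) - kf (- ln y)) * s powr \<beta>"
proof -
  assume y: "y > 0" and s: "s > 0"
  have e1: "exp (- (- ln y - ln s)) = s * y" using y s by (simp add: exp_add)
  have e2: "exp (- (- ln y)) = y" using y by simp
  have "kf (- ln y - ln s) - kf (- ln y) = ln (f (s * y)) - ln (f y) - \<beta> * ln s"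
    unfolding kf_def e1 e2 by (simp add: algebra_simps)
  hence "exp (kf (- ln y - ln s) - kf (- ln y)) = f (s * y) / f y / s powr \<beta>"
    using fpos[OF y] fpos[of "s * y"] y s by (simp add: exp_diff powr_def)
  thus ?thesis using fpos[OF y] s by (simp add: field_simps)
qed

lemma f_unif:
  assumes a: "0 < a" and ab: "a \<le> b" and eps: "\<epsilon> > 0"
  shows "\<exists>y0>0. \<forall>y s. 0 < y \<and> y < y0 \<and> a \<le> s \<and> s \<le> b \<longrightarrow>
            f (s * y) \<le> (1 + \<epsilon>) * s powr \<beta> * f y \<and> (1 - \<epsilon>) * s powr \<beta> * f y \<le> f (s * y)"
proof -
  define V where "V = max \<bar>ln a\<bar> \<bar>ln b\<bar>"
  obtain X where X: "\<forall>x\<ge>X. \<forall>v. \<bar>v\<bar> \<le> V \<longrightarrow> \<bar>kf (x + v) - kf x\<bar> < ln (1 + \<epsilon>)"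
    using uct_compact[OF kf_cont kf_lim, of "ln (1 + \<epsilon>)" V] eps by auto
  have key: "\<forall>y s. 0 < y \<and> y < exp (- X) \<and> a \<le> s \<and> s \<le> b \<longrightarrow>
            f (s * y) \<le> (1 + \<epsilon>) * s powr \<beta> * f y \<and> (1 - \<epsilon>) * s powr \<beta> * f y \<le> f (s * y)"
  proof (intro allI impI)
    fix y s assume h: "0 < y \<and> y < exp (- X) \<and> a \<le> s \<and> s \<le> b"
    hence y: "y > 0" and s: "s > 0" using a by auto
    have "ln y < - X" using h by (metis ln_exp ln_less_cancel_iff exp_gt_zero)
    hence xX: "- ln y \<ge> X" by simp
    have "ln a \<le> ln s" "ln s \<le> ln b" using h a by auto
    hence vV: "\<bar>- ln s\<bar> \<le> V" unfolding V_def by auto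
    define D where "D = kf (- ln y - ln s) - kf (- ln y)"
    have "\<bar>D\<bar> < ln (1 + \<epsilon>)" using X xX vV unfolding D_def by (metis diff_conv_add_uminus)
    hence D1: "exp D < 1 + \<epsilon>" and D2: "exp (- ln (1 + \<epsilon>)) < exp D" using eps
      by (auto simp: abs_less_iff) (metis exp_less_cancel_iff exp_ln add_pos_pos zero_less_one)
    have "exp (- ln (1 + \<epsilon>)) = 1 / (1 + \<epsilon>)" using eps by (simp add: exp_minus inverse_eq_divide)
    moreover have "1 - \<epsilon> \<le> 1 / (1 + \<epsilon>)" using eps by (simp add: field_simps)
    ultimately have D3: "1 - \<epsilon> \<le> exp D" using D2 by linarith
    have fs: "f (s * y) = exp D * (s powr \<beta> * f y)" unfolding D_def using f_scale[OF y s] by simp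
    have pos: "s powr \<beta> * f y > 0" using fpos[OF y] s by simp
    show "f (s * y) \<le> (1 + \<epsilon>) * s powr \<beta> * f y \<and> (1 - \<epsilon>) * s powr \<beta> * f y \<le> f (s * y)"
      unfolding fs using mult_right_mono[OF less_imp_le[OF D1] less_imp_le[OF pos]]
        mult_right_mono[OF D3 less_imp_le[OF pos]] by (simp add: mult.assoc)
  qed
  show ?thesis using key by (intro exI[of _ "exp (- X)"]) auto
qed

end

context rvf begin

lemma f_cont_on: "0 < a \<Longrightarrow> continuous_on {a..b} f"
  by (rule continuous_on_subset[OF fc]) auto

lemma h_cont_on: "0 < a \<Longrightarrow> continuous_on {a..b} (\<lambda>u. 1 / f u)"
proof -
  assume a: "0 < a"
  have nz: "\<forall>u\<in>{a..b}. f u \<noteq> 0" using a fpos by (smt (verit) atLeastAtMost_iff)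
  show ?thesis using f_cont_on[OF a, of b] nz by (intro continuous_on_divide continuous_on_const) auto
qed

lemma h_int: "0 < a \<Longrightarrow> (\<lambda>u. 1 / f u) integrable_on {a..b}"
  by (rule integrable_continuous_interval[OF h_cont_on])

lemma Fint_rep:
  assumes a: "0 < a" "a \<le> 1" and y: "a \<le> y"
  shows "Fint f y = integral {a..1} (\<lambda>u. 1 / f u) - integral {a..y} (\<lambda>u. 1 / f u)"
proof (cases "y \<le> 1")
  case True
  have "integral {a..y} (\<lambda>u. 1 / f u) + integral {y..1} (\<lambda>u. 1 / f u) = integral {a..1} (\<lambda>u. 1 / f u)"
    by (rule Henstock_Kurzweil_Integration.integral_combine) (use True y a h_int in auto)
  thus ?thesis using True unfolding Fint_def by simp
next
  case False
  have "integral {a..1} (\<lambda>u. 1 / f u) + integral {1..y} (\<lambda>u. 1 / f u) = integral {a..y} (\<lambda>u. 1 / f u)"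
    by (rule Henstock_Kurzweil_Integration.integral_combine) (use False y a h_int in auto)
  thus ?thesis using False unfolding Fint_def by simp
qed

lemma F_deriv:
  assumes y: "y > 0"
  shows "(Fint f has_real_derivative (- (1 / f y))) (at y)"
proof -
  define a where "a = min (y/2) (1/2)"
  have a: "0 < a" "a \<le> 1" "a < y" using y unfolding a_def by auto
  define G where "G x = integral {a..1} (\<lambda>u. 1 / f u) - integral {a..x} (\<lambda>u. 1 / f u)" for x
  have "((\<lambda>x. integral {a..x} (\<lambda>u. 1 / f u)) has_real_derivative (1 / f y)) (at y within {a..y+1})"
    using a by (intro integral_has_real_derivative h_cont_on) auto
  moreover have "at y within {a..y+1} = at y"
    using a by (intro at_within_interior) auto
  ultimately have "((\<lambda>x. integral {a..x} (\<lambda>u. 1 / f u)) has_real_derivative (1 / f y)) (at y)" by simp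
  hence "(G has_real_derivative (- (1 / f y))) (at y)"
    unfolding G_def by (intro derivative_eq_intros) auto
  moreover have "eventually (\<lambda>x. Fint f x = G x) (nhds y)"
    unfolding eventually_nhds
    using a by (intro exI[of _ "{a<..}"]) (auto simp: G_def intro!: Fint_rep)
  ultimately show ?thesis
    using DERIV_cong_ev[of y y "Fint f" G] by auto
qed

lemma F_dec: "0 < a \<Longrightarrow> a < b \<Longrightarrow> Fint f b < Fint f a"
  by (rule DERIV_neg_imp_decreasing) (auto intro!: exI F_deriv fpos)

lemma F_mono: "0 < a \<Longrightarrow> a \<le> b \<Longrightarrow> Fint f b \<le> Fint f a"
  using F_dec by (cases "a = b") (auto simp: less_imp_le order.order_iff_strict)

lemma F_cont: "continuous_on {0<..} (Fint f)"
  by (intro continuous_at_imp_continuous_on ballI DERIV_isCont[OF F_deriv]) auto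

lemma F_one: "Fint f 1 = 0"
  unfolding Fint_def by simp

lemma F_nonneg: "0 < y \<Longrightarrow> y \<le> 1 \<Longrightarrow> Fint f y \<ge> 0"
  using F_mono[of y 1] F_one by simp

lemma F_inj: "0 < y \<Longrightarrow> 0 < y' \<Longrightarrow> Fint f y = Fint f y' \<Longrightarrow> y = y'"
  using F_dec by (metis less_irrefl linorder_neq_iff)

lemma almost_inc: "\<exists>y1>0. \<forall>y y'. 0 < y \<and> y \<le> y' \<and> y' \<le> y1 \<longrightarrow> f y \<le> 2 * f y'"
proof -
  obtain y0 where y0: "y0 > 0" and U: "\<forall>y s. 0 < y \<and> y < y0 \<and> 1/2 \<le> s \<and> s \<le> 1 \<longrightarrow>
            f (s * y) \<le> (1 + 1/2) * s powr \<beta> * f y"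
    using f_unif[of "1/2" 1 "1/2"] by force
  define y1 where "y1 = y0 / 2"
  have y1: "y1 > 0" "y1 < y0" using y0 unfolding y1_def by auto
  have half: "f (s * y') \<le> 2 * f y'" if "0 < y'" "y' \<le> y1" "1/2 \<le> s" "s \<le> 1" for s y'
  proof -
    have "s powr \<beta> \<le> 1" using that beta by (intro powr_le1) auto
    hence "(1 + 1/2) * s powr \<beta> * f y' \<le> 2 * f y'" using fpos[of y'] that
      by (intro mult_right_mono) auto
    thus ?thesis using U that y1 by (meson order.trans le_less_trans)
  qed
  have halfpt: "f (y' / 2) \<le> f y'" if "0 < y'" "y' \<le> y1" for y'
  proof -
    have "(1/2::real) powr \<beta> \<le> 1/2" using beta by (intro powr_le_one_le) auto
    hence "(1 + 1/2) * (1/2) powr \<beta> * f y' \<le> f y'" using fpos[of y'] that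
      by (simp add: mult_le_cancel_right1)
    moreover have "0 < y' \<and> y' < y0 \<and> 1/2 \<le> (1/2::real) \<and> (1/2::real) \<le> 1" using that y1 by auto
    hence "f ((1/2) * y') \<le> (1 + 1/2) * (1/2) powr \<beta> * f y'" using U by blast
    ultimately show ?thesis by simp
  qed
  have P: "\<forall>y' y. 0 < y' \<and> y' \<le> y1 \<and> y' / 2 ^ n \<le> y \<and> y \<le> y' \<longrightarrow> f y \<le> 2 * f y'" for n :: nat
  proof (induction n)
    case 0
    then show ?case using fpos by (auto intro: order.order_iff_strict[THEN iffD2])
  next
    case (Suc n)
    show ?case
    proof (intro allI impI)
      fix y' y assume h: "0 < y' \<and> y' \<le> y1 \<and> y' / 2 ^ Suc n \<le> y \<and> y \<le> y'"
      show "f y \<le> 2 * f y'"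
      proof (cases "y' / 2 \<le> y")
        case True
        have "f ((y / y') * y') \<le> 2 * f y'" using h True by (intro half) (auto simp: field_simps)
        thus ?thesis using h by simp
      next
        case False
        have "0 < y'/2 \<and> y'/2 \<le> y1 \<and> (y'/2) / 2 ^ n \<le> y \<and> y \<le> y'/2"
          using h False by (auto simp: field_simps)
        hence "f y \<le> 2 * f (y' / 2)" using Suc.IH by blast
        also have "\<dots> \<le> 2 * f y'" using halfpt h by auto
        finally show ?thesis .
      qed
    qed
  qed
  show ?thesis
  proof (intro exI[of _ y1] conjI y1 allI impI)
    fix y y' assume h: "0 < y \<and> y \<le> y' \<and> y' \<le> y1"
    obtain n where "y' / y < 2 ^ n" using real_arch_pow[of 2 "y' / y"] by auto
    hence "y' / 2 ^ n \<le> y" using h by (simp add: field_simps)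
    thus "f y \<le> 2 * f y'" using P[of n] h by auto
  qed
qed

lemma AD_f:
  assumes d: "\<delta> > 0"
  shows "\<exists>y2>0. \<forall>y y'. 0 < y \<and> y \<le> y' \<and> y' \<le> y2 \<longrightarrow> f y \<le> (1 + \<delta>) * f y'"
proof -
  obtain y1 where y1: "y1 > 0" and K: "\<forall>y y'. 0 < y \<and> y \<le> y' \<and> y' \<le> y1 \<longrightarrow> f y \<le> 2 * f y'"
    using almost_inc by blast
  define M where "M = 2 * (1 + \<delta>) + 1"
  have M: "M \<ge> 1" "2 * (1 + \<delta>) / M \<le> 1" using d unfolding M_def by (auto simp: field_simps)
  obtain y0 where y0: "y0 > 0" and U: "\<forall>y s. 0 < y \<and> y < y0 \<and> 1/M \<le> s \<and> s \<le> 1 \<longrightarrow>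
            f (s * y) \<le> (1 + \<delta>) * s powr \<beta> * f y"
    using f_unif[of "1/M" 1 \<delta>] d M by force
  define y2 where "y2 = min y1 (y0 / 2)"
  have y2: "y2 > 0" "y2 \<le> y1" "y2 < y0" using y1 y0 unfolding y2_def by auto
  show ?thesis
  proof (intro exI[of _ y2] conjI y2(1) allI impI)
    fix y y' assume h: "0 < y \<and> y \<le> y' \<and> y' \<le> y2"
    hence y'pos: "y' > 0" by auto
    show "f y \<le> (1 + \<delta>) * f y'"
    proof (cases "1/M \<le> y / y'")
      case True
      have "(y / y') powr \<beta> \<le> 1" using h beta by (intro powr_le1) auto
      hence "(1 + \<delta>) * (y / y') powr \<beta> * f y' \<le> (1 + \<delta>) * f y'"
        using fpos[OF y'pos] d by (simp add: mult_le_cancel_right1 mult_le_cancel_left1)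
      moreover have "0 < y' \<and> y' < y0 \<and> 1/M \<le> y / y' \<and> y / y' \<le> 1" using True h y2 by auto
      hence "f ((y / y') * y') \<le> (1 + \<delta>) * (y / y') powr \<beta> * f y'" using U by blast
      ultimately show ?thesis using h by simp
    next
      case False
      hence yl: "y \<le> (1/M) * y'" using h by (auto simp: field_simps)
      have "(1/M) * y' \<le> y'" using M h by (auto simp: field_simps)
      hence "0 < y \<and> y \<le> (1/M) * y' \<and> (1/M) * y' \<le> y1" using yl h y2 by auto
      hence "f y \<le> 2 * f ((1/M) * y')" using K by blast
      also have "0 < y' \<and> y' < y0 \<and> 1/M \<le> 1/M \<and> 1/M \<le> (1::real)" using h y2 M by auto
      hence "f ((1/M) * y') \<le> (1 + \<delta>) * (1/M) powr \<beta> * f y'" using U by blast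
      also have "(1/M) powr \<beta> \<le> 1/M" using M beta by (intro powr_le_one_le) auto
      hence "2 * ((1 + \<delta>) * (1/M) powr \<beta> * f y') \<le> 2 * ((1 + \<delta>) * (1/M) * f y')"
        using fpos[OF y'pos] d by (intro mult_left_mono mult_right_mono) auto
      also have "\<dots> = (2 * (1 + \<delta>) / M) * f y'" by simp
      also have "\<dots> \<le> 1 * f y'" using M fpos[OF y'pos] by (intro mult_right_mono) auto
      also have "\<dots> \<le> (1 + \<delta>) * f y'" using fpos[OF y'pos] d by simp
      finally show ?thesis by simp
    qed
  qed
qed

end

context rvf begin

lemma F_inf: "filterlim (Fint f) at_top (at_right 0)"
proof -
  obtain y1 where y1: "y1 > 0" and K: "\<forall>y y'. 0 < y \<and> y \<le> y' \<and> y' \<le> y1 \<longrightarrow> f y \<le> 2 * f y'"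
    using almost_inc by blast
  define p where "p = (1/2::real) powr \<beta>"
  have "(2::real) powr 1 < 2 powr \<beta>" using beta by (intro powr_less_mono) auto
  hence p: "0 < p" "p < 1/2" unfolding p_def by (auto simp: powr_divide)
  define \<epsilon> where "\<epsilon> = (1/2 - p) / (2 * p)"
  have eps: "\<epsilon> > 0" using p unfolding \<epsilon>_def by auto
  define q where "q = 2 * (1 + \<epsilon>) * p"
  have q: "q = 1/2 + p" using p unfolding q_def \<epsilon>_def by (simp add: field_simps)
  hence q1: "0 < q" "q < 1" using p by auto
  obtain y0 where y0: "y0 > 0" and U: "\<forall>y s. 0 < y \<and> y < y0 \<and> 1/2 \<le> s \<and> s \<le> 1/2 \<longrightarrow>
            f (s * y) \<le> (1 + \<epsilon>) * s powr \<beta> * f y"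
    using f_unif[of "1/2" "1/2" \<epsilon>] eps by force
  define y2 where "y2 = min (min y1 (y0/2)) 1"
  have y2: "0 < y2" "y2 \<le> y1" "y2 < y0" "y2 \<le> 1" using y1 y0 unfolding y2_def by auto
  define a where "a n = y2 / 2 ^ n" for n :: nat
  have a_pos: "a n > 0" for n unfolding a_def using y2 by simp
  have a_le: "a n \<le> y2" for n unfolding a_def using y2 by (simp add: field_simps)
  have a_Suc: "a (Suc n) = (1/2) * a n" for n unfolding a_def by simp
  have fa: "f (a (Suc n)) \<le> (q/2) * f (a n)" for n
  proof -
    have "0 < a n \<and> a n < y0 \<and> 1/2 \<le> (1/2::real) \<and> (1/2::real) \<le> 1/2" using a_pos a_le y2 by (auto intro: le_less_trans)
    hence "f ((1/2) * a n) \<le> (1 + \<epsilon>) * (1/2) powr \<beta> * f (a n)" using U by blast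
    moreover have "(q/2) * f (a n) = (1 + \<epsilon>) * (1/2) powr \<beta> * f (a n)" unfolding q_def p_def by simp
    ultimately show ?thesis unfolding a_Suc by linarith
  qed
  have ratio: "a n / f (a n) \<ge> (1/q) ^ n * (y2 / f y2)" for n
  proof (induction n)
    case 0 thus ?case by (simp add: a_def)
  next
    case (Suc n)
    have fp: "f (a n) > 0" "f (a (Suc n)) > 0" using fpos a_pos by auto
    have "a (Suc n) / f (a (Suc n)) \<ge> a (Suc n) / ((q/2) * f (a n))"
      using fa[of n] fp a_pos[of "Suc n"] q1 by (intro divide_left_mono) auto
    also have "a (Suc n) / ((q/2) * f (a n)) = (1/q) * (a n / f (a n))"
      unfolding a_Suc using q1 fp by (simp add: field_simps)
    finally have "a (Suc n) / f (a (Suc n)) \<ge> (1/q) * (a n / f (a n))" .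
    moreover have "(1/q) * (a n / f (a n)) \<ge> (1/q) * ((1/q) ^ n * (y2 / f y2))"
      using Suc.IH q1 by (intro mult_left_mono) auto
    ultimately show ?case by simp
  qed
  have step: "Fint f (a (Suc n)) \<ge> (a n / f (a n)) / 4" for n
  proof -
    have lt: "a (Suc n) < a n" using a_pos[of n] unfolding a_Suc by simp
    obtain z where z: "a (Suc n) < z" "z < a n"
      and eq: "Fint f (a n) - Fint f (a (Suc n)) = (a n - a (Suc n)) * (- (1 / f z))"
      using MVT2[OF lt, of "Fint f" "\<lambda>y. - (1 / f y)"] F_deriv a_pos
      by (metis less_le_trans)
    have zpos: "z > 0" using z a_pos[of "Suc n"] by simp
    have fz: "f z \<le> 2 * f (a n)" using K zpos z a_le[of n] y2 by auto
    have fzp: "f z > 0" using fpos zpos by auto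
    have "Fint f (a n) \<ge> 0" using F_nonneg a_pos a_le y2 by (meson order.trans)
    hence "Fint f (a (Suc n)) \<ge> (a n - a (Suc n)) / f z" using eq by (simp add: field_simps)
    moreover have "(a n - a (Suc n)) / f z \<ge> (a n / 2) / (2 * f (a n))"
      unfolding a_Suc using fz fzp a_pos[of n] by (intro frac_le) auto
    ultimately show ?thesis by (simp add: field_simps)
  qed
  show ?thesis
    unfolding filterlim_at_top
  proof
    fix Z :: real
    obtain n where n: "4 * \<bar>Z\<bar> / (y2 / f y2) < (1/q) ^ n"
      using real_arch_pow[of "1/q" "4 * \<bar>Z\<bar> / (y2 / f y2)"] q1 by auto
    have pos: "y2 / f y2 > 0" using y2 fpos by auto
    have "Z \<le> (a n / f (a n)) / 4"
    proof -
      have "4 * \<bar>Z\<bar> < (1/q) ^ n * (y2 / f y2)" using n unfolding pos_divide_less_eq[OF pos] .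
      hence "4 * \<bar>Z\<bar> < a n / f (a n)" using ratio[of n] by (rule less_le_trans)
      hence "\<bar>Z\<bar> < a n / f (a n) / 4" by simp
      thus ?thesis using abs_ge_self[of Z] by linarith
    qed
    hence Zle: "Z \<le> Fint f (a (Suc n))" using step[of n] by linarith
    show "eventually (\<lambda>y. Z \<le> Fint f y) (at_right 0)"
      unfolding eventually_at_right_field
    proof (intro exI[of _ "a (Suc n)"] conjI allI impI)
      show "0 < a (Suc n)" by (rule a_pos)
      fix y :: real assume "0 < y" "y < a (Suc n)"
      hence "Fint f (a (Suc n)) < Fint f y" by (intro F_dec)
      thus "Z \<le> Fint f y" using Zle by linarith
    qed
  qed
qed

lemma F2:
  assumes c: "c > 0"
  shows "((\<lambda>y. Fint f (c * y) / Fint f y) \<longlongrightarrow> c powr (1 - \<beta>)) (at_right 0)"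
proof (rule lhopital_right_0_at_top[where f' = "\<lambda>y. - (1 / f (c * y)) * c" and g' = "\<lambda>y. - (1 / f y)"])
  show "LIM x at_right 0. Fint f x :> at_top" by (rule F_inf)
  show "eventually (\<lambda>x. - (1 / f x) \<noteq> 0) (at_right 0)"
    unfolding eventually_at_right_field using fpos by (intro exI[of _ 1]) (auto simp: less_imp_neq[symmetric])
  show "eventually (\<lambda>x. ((\<lambda>y. Fint f (c * y)) has_real_derivative - (1 / f (c * x)) * c) (at x)) (at_right 0)"
    unfolding eventually_at_right_field
  proof (intro exI[of _ 1] conjI allI impI)
    fix x :: real assume "0 < x"
    hence cx: "c * x > 0" using c by simp
    show "((\<lambda>y. Fint f (c * y)) has_real_derivative - (1 / f (c * x)) * c) (at x)"
      using DERIV_chain2[OF F_deriv[OF cx] DERIV_cmult_Id[of c x]] by simp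
  qed simp
  show "eventually (\<lambda>x. (Fint f has_real_derivative - (1 / f x)) (at x)) (at_right 0)"
    unfolding eventually_at_right_field by (intro exI[of _ 1]) (auto intro!: F_deriv)
  have "((\<lambda>y. c * inverse (f (c * y) / f y)) \<longlongrightarrow> c * inverse (c powr \<beta>)) (at_right 0)"
    using c by (intro tendsto_intros frv) auto
  moreover have "c * inverse (c powr \<beta>) = c powr (1 - \<beta>)" using c by (simp add: powr_diff field_simps)
  moreover have "eventually (\<lambda>y. c * inverse (f (c * y) / f y) = - (1 / f (c * y)) * c / - (1 / f y)) (at_right 0)"
    unfolding eventually_at_right_field using fpos c
    by (intro exI[of _ 1]) (auto simp: field_simps less_imp_neq[symmetric])
  ultimately show "((\<lambda>y. - (1 / f (c * y)) * c / - (1 / f y)) \<longlongrightarrow> c powr (1 - \<beta>)) (at_right 0)"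
    using tendsto_cong by fastforce
qed

end

context rvf begin

lemma Finv_ex:
  assumes t: "t \<ge> 0"
  shows "0 < Finv f t \<and> Finv f t \<le> 1 \<and> Fint f (Finv f t) = t"
proof -
  have "eventually (\<lambda>y. t \<le> Fint f y) (at_right 0)" using F_inf unfolding filterlim_at_top by blast
  then obtain b where b: "b > 0" "\<forall>y>0. y < b \<longrightarrow> t \<le> Fint f y" unfolding eventually_at_right_field by auto
  define y0 where "y0 = min (b/2) 1"
  have y0: "0 < y0" "y0 < b" "y0 \<le> 1" using b unfolding y0_def by auto
  have "t \<le> Fint f y0" using b y0 by auto
  moreover have "continuous_on {y0..1} (Fint f)" using y0 by (intro continuous_on_subset[OF F_cont]) auto
  ultimately obtain y where y: "y0 \<le> y" "y \<le> 1" "Fint f y = t"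
    using IVT2'[of "Fint f" 1 t y0] F_one t y0 by auto
  have "Finv f t = y" unfolding Finv_def
    by (rule the_equality) (use y y0 F_inj in auto)
  thus ?thesis using y y0 by auto
qed

lemma Finv_F: "y > 0 \<Longrightarrow> Finv f (Fint f y) = y"
  unfolding Finv_def by (rule the_equality) (use F_inj in auto)

lemma Finv_antimono: "0 \<le> s' \<Longrightarrow> s' \<le> s \<Longrightarrow> Finv f s \<le> Finv f s'"
proof (rule ccontr)
  assume h: "0 \<le> s'" "s' \<le> s" "\<not> Finv f s \<le> Finv f s'"
  have "Fint f (Finv f s) < Fint f (Finv f s')" using h Finv_ex[of s'] by (intro F_dec) auto
  thus False using h Finv_ex[of s] Finv_ex[of s'] by auto
qed

lemma Finv_le: "y > 0 \<Longrightarrow> Fint f y \<le> t \<Longrightarrow> 0 \<le> t \<Longrightarrow> Finv f t \<le> y"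
proof (rule ccontr)
  assume h: "y > 0" "Fint f y \<le> t" "0 \<le> t" "\<not> Finv f t \<le> y"
  have "Fint f (Finv f t) < Fint f y" using h by (intro F_dec) auto
  thus False using h Finv_ex[of t] by auto
qed

lemma Finv_lim: "filterlim (Finv f) (at_right 0) at_top"
  unfolding filterlim_at
proof
  show "eventually (\<lambda>t. Finv f t \<in> {0<..} \<and> Finv f t \<noteq> 0) at_top"
    unfolding eventually_at_top_linorder
  proof (intro exI[of _ 0] allI impI)
    fix t :: real assume "0 \<le> t" thus "Finv f t \<in> {0<..} \<and> Finv f t \<noteq> 0" using Finv_ex[of t] by auto
  qed
  show "(Finv f \<longlongrightarrow> 0) at_top"
  proof (rule tendstoI)
    fix e :: real assume e: "e > 0"
    show "eventually (\<lambda>t. dist (Finv f t) 0 < e) at_top"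
      unfolding eventually_at_top_linorder
    proof (intro exI[of _ "max 0 (Fint f (e/2))"] allI impI)
      fix t assume "max 0 (Fint f (e/2)) \<le> t"
      hence "Finv f t \<le> e/2" "0 < Finv f t" using e Finv_le[of "e/2" t] Finv_ex[of t] by auto
      thus "dist (Finv f t) 0 < e" using e by auto
    qed
  qed
qed

lemma F4:
  assumes l: "lam > 0"
  shows "((\<lambda>t. Finv f (lam * t) / Finv f t) \<longlongrightarrow> lam powr (-1/(\<beta>-1))) at_top"
proof -
  define c where "c = lam powr (-1/(\<beta>-1))"
  have c: "c > 0" using l unfolding c_def by simp
  have e: "(-1/(\<beta>-1)) * (1-\<beta>) = 1" using beta by (simp add: field_simps)
  have cl: "c powr (1 - \<beta>) = lam" unfolding c_def powr_powr e using l by simp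
  have key: "eventually (\<lambda>t. t > 0 \<and> Fint f (Finv f t) = t \<and> Fint f (Finv f (lam * t)) = lam * t
        \<and> Finv f t > 0 \<and> Finv f (lam * t) > 0) at_top"
    unfolding eventually_at_top_linorder
    using Finv_ex l by (intro exI[of _ 1]) auto
  have FL: "((\<lambda>t. Fint f (a * Finv f t) / Fint f (Finv f t)) \<longlongrightarrow> a powr (1 - \<beta>)) at_top" if "a > 0" for a
    by (rule filterlim_compose[OF F2[OF that] Finv_lim])
  show ?thesis unfolding c_def[symmetric]
  proof (rule order_tendstoI)
    fix a assume a: "a < c"
    show "eventually (\<lambda>t. a < Finv f (lam * t) / Finv f t) at_top"
    proof (cases "a \<le> 0")
      case True
      show ?thesis using key
      proof eventually_elim
        case (elim t)
        hence "Finv f (lam * t) / Finv f t > 0" by simp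
        thus ?case using True by linarith
      qed
    next
      case False
      hence a0: "a > 0" by simp
      have "c powr (1 - \<beta>) < a powr (1 - \<beta>)" using a a0 beta by (intro powr_less_mono2_neg) auto
      hence "lam < a powr (1 - \<beta>)" using cl by simp
      hence ev: "eventually (\<lambda>t. lam < Fint f (a * Finv f t) / Fint f (Finv f t)) at_top"
        by (rule order_tendstoD(1)[OF FL[OF a0]])
      show ?thesis using ev key
      proof eventually_elim
        case (elim t)
        hence "lam * t < Fint f (a * Finv f t)" by (simp add: pos_less_divide_eq)
        hence "Fint f (Finv f (lam * t)) < Fint f (a * Finv f t)" using elim by simp
        hence "a * Finv f t < Finv f (lam * t)" using F_mono[of "Finv f (lam * t)" "a * Finv f t"] elim
          by (meson not_le leD)
        thus ?case using elim by (simp add: pos_less_divide_eq)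
      qed
    qed
  next
    fix b assume b: "c < b"
    hence b0: "b > 0" using c by simp
    have "b powr (1 - \<beta>) < c powr (1 - \<beta>)" using b c beta by (intro powr_less_mono2_neg) auto
    hence "b powr (1 - \<beta>) < lam" using cl by simp
    hence ev: "eventually (\<lambda>t. Fint f (b * Finv f t) / Fint f (Finv f t) < lam) at_top"
      by (rule order_tendstoD(2)[OF FL[OF b0]])
    show "eventually (\<lambda>t. Finv f (lam * t) / Finv f t < b) at_top" using ev key
    proof eventually_elim
      case (elim t)
      hence "Fint f (b * Finv f t) < lam * t" by (simp add: divide_less_eq)
      hence "Fint f (b * Finv f t) < Fint f (Finv f (lam * t))" using elim by simp
      hence "Finv f (lam * t) < b * Finv f t" using F_mono[of "b * Finv f t" "Finv f (lam * t)"] elim b0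
        by (meson not_le leD mult_pos_pos)
      thus ?case using elim by (simp add: divide_less_eq)
    qed
  qed
qed

lemma Phi1:
  assumes l: "lam > 0"
  shows "((\<lambda>t. f (Finv f (lam * t)) / f (Finv f t)) \<longlongrightarrow> lam powr (- \<beta> / (\<beta> - 1))) at_top"
proof -
  define c where "c = lam powr (-1/(\<beta>-1))"
  have c: "c > 0" using l unfolding c_def by simp
  define s where "s t = Finv f (lam * t) / Finv f t" for t
  define z where "z t = Finv f t" for t
  have s_lim: "(s \<longlongrightarrow> c) at_top" unfolding s_def c_def by (rule F4[OF l])
  have z_lim: "(z \<longlongrightarrow> 0) at_top" using Finv_lim unfolding z_def filterlim_at by auto
  have zpos: "eventually (\<lambda>t. z t > 0 \<and> Finv f (lam * t) > 0) at_top"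
    unfolding z_def eventually_at_top_linorder using Finv_ex l by (intro exI[of _ 0]) auto
  have R: "((\<lambda>t. f (s t * z t) / (s t powr \<beta> * f (z t))) \<longlongrightarrow> 1) at_top"
  proof (rule tendstoI)
    fix e :: real assume e: "e > 0"
    obtain y0 where y0: "y0 > 0" and U: "\<forall>y s. 0 < y \<and> y < y0 \<and> c/2 \<le> s \<and> s \<le> 2*c \<longrightarrow>
            f (s * y) \<le> (1 + e/2) * s powr \<beta> * f y \<and> (1 - e/2) * s powr \<beta> * f y \<le> f (s * y)"
      using f_unif[of "c/2" "2*c" "e/2"] c e by auto
    have e1: "eventually (\<lambda>t. c/2 < s t) at_top" using s_lim c by (intro order_tendstoD) auto
    have e2: "eventually (\<lambda>t. s t < 2*c) at_top" using s_lim c by (intro order_tendstoD) auto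
    have e3: "eventually (\<lambda>t. z t < y0) at_top" using z_lim y0 by (intro order_tendstoD) auto
    show "eventually (\<lambda>t. dist (f (s t * z t) / (s t powr \<beta> * f (z t))) 1 < e) at_top"
      using e1 e2 e3 zpos
    proof eventually_elim
      case (elim t)
      hence B: "f (s t * z t) \<le> (1 + e/2) * s t powr \<beta> * f (z t) \<and> (1 - e/2) * s t powr \<beta> * f (z t) \<le> f (s t * z t)"
        using U by auto
      have P: "s t powr \<beta> * f (z t) > 0" using elim c fpos by auto
      have "f (s t * z t) / (s t powr \<beta> * f (z t)) \<le> 1 + e/2"
        using B P by (simp add: divide_le_eq mult.assoc)
      moreover have "1 - e/2 \<le> f (s t * z t) / (s t powr \<beta> * f (z t))"
        using B P by (simp add: le_divide_eq mult.assoc)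
      ultimately show ?case using e by (auto simp: dist_real_def abs_le_iff)
    qed
  qed
  have "((\<lambda>t. f (s t * z t) / (s t powr \<beta> * f (z t)) * s t powr \<beta>) \<longlongrightarrow> 1 * c powr \<beta>) at_top"
    using c by (intro tendsto_intros R s_lim) auto
  moreover have "c powr \<beta> = lam powr (- \<beta> / (\<beta> - 1))" unfolding c_def powr_powr by (simp add: field_simps)
  moreover have "eventually (\<lambda>t. f (s t * z t) / (s t powr \<beta> * f (z t)) * s t powr \<beta> = f (Finv f (lam * t)) / f (Finv f t)) at_top"
    using zpos
  proof eventually_elim
    case (elim t)
    hence "s t * z t = Finv f (lam * t)" unfolding s_def z_def by simp
    moreover have "s t powr \<beta> > 0" using elim unfolding s_def z_def by simp
    ultimately show ?case unfolding z_def by simp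
  qed
  ultimately show ?thesis using tendsto_cong by fastforce
qed

lemma AD_phi:
  assumes d: "\<delta> > 0"
  shows "\<exists>S\<ge>0. \<forall>s s'. S \<le> s' \<and> s' \<le> s \<longrightarrow> f (Finv f s) \<le> (1 + \<delta>) * f (Finv f s')"
proof -
  obtain y2 where y2: "y2 > 0" and A: "\<forall>y y'. 0 < y \<and> y \<le> y' \<and> y' \<le> y2 \<longrightarrow> f y \<le> (1 + \<delta>) * f y'"
    using AD_f[OF d] by blast
  show ?thesis
  proof (intro exI[of _ "max 0 (Fint f y2)"] conjI allI impI)
    fix s s' assume h: "max 0 (Fint f y2) \<le> s' \<and> s' \<le> s"
    have "Finv f s' \<le> y2" using h y2 by (intro Finv_le) auto
    moreover have "Finv f s \<le> Finv f s'" using h by (intro Finv_antimono) auto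
    moreover have "Finv f s > 0" using h Finv_ex[of s] by auto
    ultimately show "f (Finv f s) \<le> (1 + \<delta>) * f (Finv f s')" using A by blast
  qed simp
qed

end

lemma first_time:
  fixes w :: "real \<Rightarrow> real"
  assumes ab: "a < b" and wc: "continuous_on {a..b} w" and wa: "w a < 0" and wb: "w b \<ge> 0"
  shows "\<exists>c. a < c \<and> c \<le> b \<and> w c \<ge> 0 \<and> (\<forall>s. a \<le> s \<and> s < c \<longrightarrow> w s < 0)"
proof -
  define S where "S = {a..b} \<inter> w -` {0..}"
  have cl: "closed S" unfolding S_def by (rule continuous_closed_preimage[OF wc]) auto
  have "b \<in> S" using wb ab unfolding S_def by auto
  hence ne: "S \<noteq> {}" by auto
  have bdd: "bdd_below S" unfolding S_def by (auto intro: bdd_belowI[of _ a])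
  define c where "c = Inf S"
  have cS: "c \<in> S" unfolding c_def by (rule closed_contains_Inf[OF ne bdd cl])
  have cle: "\<And>s. s \<in> S \<Longrightarrow> c \<le> s" unfolding c_def using bdd by (simp add: cInf_lower)
  have "c \<noteq> a" using cS wa unfolding S_def by auto
  hence "a < c" using cS unfolding S_def by auto
  moreover have "\<forall>s. a \<le> s \<and> s < c \<longrightarrow> w s < 0"
  proof (intro allI impI)
    fix s assume s: "a \<le> s \<and> s < c"
    hence "s \<notin> S" using cle by force
    moreover have "s \<le> b" using s cS unfolding S_def by auto
    ultimately show "w s < 0" using s unfolding S_def by auto
  qed
  ultimately show ?thesis using cS unfolding S_def by auto
qed

lemma last_time:
  fixes w :: "real \<Rightarrow> real"
  assumes ab: "a < b" and wc: "continuous_on {a..b} w" and wa: "w a \<le> 0" and wb: "w b > 0"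
  shows "\<exists>c. a \<le> c \<and> c < b \<and> w c \<le> 0 \<and> (\<forall>s. c < s \<and> s \<le> b \<longrightarrow> w s > 0)"
proof -
  define S where "S = {a..b} \<inter> w -` {..0}"
  have cl: "closed S" unfolding S_def by (rule continuous_closed_preimage[OF wc]) auto
  have "a \<in> S" using wa ab unfolding S_def by auto
  hence ne: "S \<noteq> {}" by auto
  have bdd: "bdd_above S" unfolding S_def by (auto intro: bdd_aboveI[of _ b])
  define c where "c = Sup S"
  have cS: "c \<in> S" unfolding c_def by (rule closed_contains_Sup[OF ne bdd cl])
  have cle: "\<And>s. s \<in> S \<Longrightarrow> s \<le> c" unfolding c_def using bdd by (simp add: cSup_upper)
  have "c \<noteq> b" using cS wb unfolding S_def by auto
  hence "c < b" using cS unfolding S_def by auto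
  moreover have "\<forall>s. c < s \<and> s \<le> b \<longrightarrow> w s > 0"
  proof (intro allI impI)
    fix s assume s: "c < s \<and> s \<le> b"
    hence "s \<notin> S" using cle by force
    moreover have "a \<le> s" using s cS unfolding S_def by auto
    ultimately show "w s > 0" using s unfolding S_def by auto
  qed
  ultimately show ?thesis using cS unfolding S_def by auto
qed

lemma deriv_cont_on:
  assumes "\<And>t. t > T \<Longrightarrow> (w has_real_derivative w' t) (at t)" "T < a"
  shows "continuous_on {a..b} w"
proof (intro continuous_at_imp_continuous_on ballI)
  fix x assume "x \<in> {a..b}"
  hence "x > T" using assms(2) by auto
  thus "isCont w x" using assms(1) by (blast intro: DERIV_isCont)
qed

lemma barrier:
  fixes w w' :: "real \<Rightarrow> real"
  assumes der: "\<And>t. t > T \<Longrightarrow> (w has_real_derivative w' t) (at t)"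
    and neg: "\<And>t. t > T \<Longrightarrow> w t \<ge> 0 \<Longrightarrow> w' t \<le> -\<kappa>" and k: "\<kappa> > 0"
  shows "eventually (\<lambda>t. w t < 0) at_top"
proof -
  have "\<exists>t2>T. w t2 < 0"
  proof (rule ccontr)
    assume "\<not> ?thesis"
    hence nn: "\<And>t. t > T \<Longrightarrow> w t \<ge> 0" by force
    define a where "a = T + 1"
    define b where "b = a + (\<bar>w a\<bar> + 1) / \<kappa>"
    have ab: "a < b" using k unfolding b_def by (simp add: field_simps)
    have Ta: "T < a" unfolding a_def by simp
    obtain z where z: "a < z" "z < b" "w b - w a = (b - a) * w' z"
      using MVT2[OF ab, of w w'] der Ta by force
    have "w' z \<le> -\<kappa>" using neg nn z Ta by auto
    hence "(b - a) * w' z \<le> (b - a) * (-\<kappa>)" using ab by (intro mult_left_mono) auto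
    also have "(b - a) * (-\<kappa>) = - (\<bar>w a\<bar> + 1)" using k unfolding b_def by (simp add: field_simps)
    finally have "w b < 0" using z(3) by linarith
    thus False using nn[of b] ab Ta by auto
  qed
  then obtain t2 where t2: "t2 > T" "w t2 < 0" by blast
  have "\<forall>t\<ge>t2. w t < 0"
  proof (rule ccontr)
    assume "\<not> ?thesis"
    then obtain t where t: "t \<ge> t2" "w t \<ge> 0" by force
    hence tt: "t2 < t" using t2 by (cases "t = t2") auto
    obtain c where c: "t2 < c" "c \<le> t" "w c \<ge> 0" "\<forall>s. t2 \<le> s \<and> s < c \<longrightarrow> w s < 0"
      using first_time[OF tt deriv_cont_on[OF der t2(1)] t2(2) t(2)] by blast
    have "w' c \<le> -\<kappa>" using neg c t2 by auto
    hence "w' c < 0" using k by simp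
    then obtain d where d: "d > 0" "\<forall>h>0. h < d \<longrightarrow> w c < w (c - h)"
      using DERIV_neg_dec_left[OF der[of c]] c t2 by force
    define h where "h = min (d/2) ((c - t2)/2)"
    have hle: "h \<le> (c - t2)/2" "h \<le> d/2" unfolding h_def by (rule min.cobounded2, rule min.cobounded1)
    have h: "h > 0" "h < d" "t2 \<le> c - h" "c - h < c" using d c hle unfolding h_def by auto
    have "w c < w (c - h)" using d h by auto
    moreover have "w (c - h) < 0" using c h by auto
    ultimately show False using c by linarith
  qed
  thus ?thesis unfolding eventually_at_top_linorder by blast
qed

lemma g_local:
  fixes g :: "real \<Rightarrow> real" and \<theta> \<epsilon> :: real
  assumes gc: "continuous_on {0<..} g" and gpos: "\<And>t. t > 0 \<Longrightarrow> g t > 0"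
    and grv: "\<And>c. c > 0 \<Longrightarrow> ((\<lambda>t. g (c * t) / g t) \<longlongrightarrow> c powr (- \<theta>)) at_top"
    and th: "\<theta> > 0" and eps: "\<epsilon> > 0"
  shows "\<exists>\<eta>>0. \<eta> < 1 \<and> (\<exists>T>0. \<forall>t\<ge>T. \<forall>lam. 1 - \<eta> \<le> lam \<and> lam \<le> 1 \<longrightarrow>
            (1 - \<epsilon>) * g t \<le> g (lam * t) \<and> g (lam * t) \<le> (1 + \<epsilon>) * g t)"
proof -
  define kg where "kg x = ln (g (exp x)) + \<theta> * x" for x
  have kc: "continuous_on UNIV kg"
  proof -
    have "continuous_on UNIV (\<lambda>x. g (exp x))"
      by (rule continuous_on_compose2[OF gc]) (auto intro!: continuous_intros)
    moreover have "\<And>x. g (exp x) \<noteq> 0" using gpos by (metis exp_gt_zero less_irrefl)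
    ultimately show ?thesis unfolding kg_def
      by (auto intro!: continuous_intros continuous_on_ln)
  qed
  have kl: "((\<lambda>x. kg (x + v) - kg x) \<longlongrightarrow> 0) at_top" for v
  proof -
    have eq: "kg (x + v) - kg x = ln (g (exp v * exp x) / g (exp x)) + \<theta> * v" for x
    proof -
      have "exp (x + v) = exp v * exp x" by (simp add: exp_add)
      moreover have "g (exp v * exp x) > 0" "g (exp x) > 0" using gpos by auto
      ultimately show ?thesis unfolding kg_def by (simp add: ln_div algebra_simps)
    qed
    have "((\<lambda>x. g (exp v * exp x) / g (exp x)) \<longlongrightarrow> exp v powr (- \<theta>)) at_top"
      by (rule filterlim_compose[OF grv exp_at_top]) simp
    hence "((\<lambda>x. ln (g (exp v * exp x) / g (exp x)) + \<theta> * v) \<longlongrightarrow> ln (exp v powr (- \<theta>)) + \<theta> * v) at_top"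
      by (intro tendsto_intros) auto
    moreover have "ln (exp v powr (- \<theta>)) + \<theta> * v = 0" by (simp add: powr_def)
    ultimately show ?thesis using eq by simp
  qed
  define d where "d = ln (1 + \<epsilon>) / 2"
  have d: "d > 0" using eps unfolding d_def by simp
  obtain \<delta> X where dl: "\<delta> > 0" and X: "\<forall>x\<ge>X. \<forall>v. \<bar>v\<bar> < \<delta> \<longrightarrow> \<bar>kg (x + v) - kg x\<bar> < d"
    using uct_local[OF kc kl d] by blast
  define \<delta>' where "\<delta>' = min \<delta> (ln (1 + \<epsilon>) / \<theta>)"
  have L: "ln (1 + \<epsilon>) > 0" using eps by simp
  have dl'1: "\<delta>' > 0" "\<delta>' \<le> \<delta>" "\<delta>' \<le> ln (1 + \<epsilon>) / \<theta>" using dl L th unfolding \<delta>'_def by auto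
  have "\<theta> * \<delta>' \<le> \<theta> * (ln (1 + \<epsilon>) / \<theta>)" using dl'1 th by (intro mult_left_mono) auto
  hence dl': "\<delta>' > 0" "\<delta>' \<le> \<delta>" "\<theta> * \<delta>' \<le> ln (1 + \<epsilon>)" using dl'1 th by auto
  define \<eta> where "\<eta> = 1 - exp (- \<delta>' / 2)"
  have eta: "\<eta> > 0" "\<eta> < 1" using dl' unfolding \<eta>_def by auto
  have key: "\<forall>t\<ge>max 1 (exp X). \<forall>lam. 1 - \<eta> \<le> lam \<and> lam \<le> 1 \<longrightarrow>
            (1 - \<epsilon>) * g t \<le> g (lam * t) \<and> g (lam * t) \<le> (1 + \<epsilon>) * g t"
  proof (intro allI impI)
    fix t lam assume t: "max 1 (exp X) \<le> t" and lam: "1 - \<eta> \<le> lam \<and> lam \<le> 1"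
    have tp: "t > 0" using t by auto
    have lp: "lam > 0" using lam eta by auto
    have "exp X \<le> t" using t by simp
    hence xX: "ln t \<ge> X" using ln_le_cancel_iff[of "exp X" t] tp by simp
    have "exp (- \<delta>' / 2) \<le> lam" using lam unfolding \<eta>_def by simp
    hence l1: "ln lam \<ge> - \<delta>' / 2" using ln_le_cancel_iff[of "exp (- \<delta>' / 2)" lam] lp by simp
    have l2: "ln lam \<le> 0" using lam lp by simp
    have v1: "\<bar>ln lam\<bar> < \<delta>" using l1 l2 dl' by linarith
    have "\<theta> * (- ln lam) \<le> \<theta> * (\<delta>' / 2)" using l1 th by (intro mult_left_mono) auto
    hence v2: "- (\<theta> * ln lam) \<le> \<theta> * \<delta>' / 2" by simp
    have v3: "0 \<le> - (\<theta> * ln lam)" using l2 th by (simp add: mult_nonneg_nonpos)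
    note v = v1 v2 v3
    define D where "D = kg (ln t + ln lam) - kg (ln t)"
    have D: "\<bar>D\<bar> < d" using X xX v unfolding D_def by blast
    define E where "E = D - \<theta> * ln lam"
    have gs: "g (lam * t) = g t * exp E"
    proof -
      have "exp (ln t + ln lam) = lam * t" using tp lp by (simp add: exp_add)
      hence "D = ln (g (lam * t)) - ln (g t) + \<theta> * ln lam" unfolding D_def kg_def using tp by (simp add: algebra_simps)
      hence "E = ln (g (lam * t)) - ln (g t)" unfolding E_def by simp
      hence "exp E = g (lam * t) / g t" using gpos tp lp by (simp add: exp_diff)
      thus ?thesis using gpos[OF tp] by simp
    qed
    have E1: "E < ln (1 + \<epsilon>)" using D v dl' unfolding E_def d_def by (auto simp: abs_less_iff)
    have E2: "- ln (1 + \<epsilon>) < E" using D v unfolding E_def d_def by (auto simp: abs_less_iff)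
    have "exp E < 1 + \<epsilon>" using E1 eps by (metis exp_less_cancel_iff exp_ln add_pos_pos zero_less_one)
    moreover have "exp (- ln (1 + \<epsilon>)) < exp E" using E2 by simp
    moreover have "exp (- ln (1 + \<epsilon>)) = 1 / (1 + \<epsilon>)" using eps by (simp add: exp_minus inverse_eq_divide)
    moreover have "1 - \<epsilon> \<le> 1 / (1 + \<epsilon>)" using eps by (simp add: field_simps)
    ultimately have "1 - \<epsilon> \<le> exp E" "exp E \<le> 1 + \<epsilon>" by linarith+
    thus "(1 - \<epsilon>) * g t \<le> g (lam * t) \<and> g (lam * t) \<le> (1 + \<epsilon>) * g t"
      unfolding gs using gpos[OF tp] by (auto simp: mult.commute intro: mult_left_mono)
  qed
  show ?thesis
    using key eta by (intro exI[of _ \<eta>]) (auto intro!: exI[of _ "max 1 (exp X)"])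
qed


lemma small_delta:
  fixes p :: real
  assumes p: "0 < p" "p < 1"
  shows "\<exists>\<delta>>0. \<delta> < 1 \<and> p * (1 + \<delta>)^2 \<le> 1 - \<delta>"
proof (intro exI[of _ "(1 - p) / 4"] conjI)
  define \<delta> where "\<delta> = (1 - p) / 4"
  have d: "0 < \<delta>" "\<delta> < 1" "4 * \<delta> = 1 - p" using p unfolding \<delta>_def by auto
  have "\<delta> * \<delta> \<le> \<delta> * 1" using d by (intro mult_left_mono) auto
  hence "(1 + \<delta>)^2 \<le> 1 + 3 * \<delta>" by (simp add: power2_eq_square algebra_simps)
  hence "p * (1 + \<delta>)^2 \<le> p * (1 + 3 * \<delta>)" using p by (intro mult_left_mono) auto
  also have "p * (1 + 3 * \<delta>) = p + 3 * (p * \<delta>)" by (simp add: algebra_simps)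
  also have "p * \<delta> \<le> 1 * \<delta>" using p d by (intro mult_right_mono) auto
  hence "p + 3 * (p * \<delta>) \<le> 1 - \<delta>" using d by linarith
  finally show "p * (1 + (1 - p) / 4)^2 \<le> 1 - (1 - p) / 4" unfolding \<delta>_def .
qed (use p in auto)

locale sol = rvf f \<beta> for f \<beta> +
  fixes g u :: "real \<Rightarrow> real" and \<theta> :: real
  assumes gc: "continuous_on {0<..} g" and gpos: "\<And>t. t > 0 \<Longrightarrow> g t > 0"
    and grv: "\<And>c. c > 0 \<Longrightarrow> ((\<lambda>t. g (c * t) / g t) \<longlongrightarrow> c powr (- \<theta>)) at_top"
    and th: "\<theta> > 0"
    and du: "\<And>t. t > 0 \<Longrightarrow> (u has_real_derivative (1 - g t / f (Finv f (u t)))) (at t)"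
    and phipos: "\<And>t. t > 0 \<Longrightarrow> f (Finv f (u t)) > 0"
    and ulim: "filterlim u at_top at_top"
    and pu_cont: "continuous_on {0<..} (\<lambda>t. f (Finv f (u t)))"
begin

lemma phi_pos: "s \<ge> 0 \<Longrightarrow> f (Finv f s) > 0"
  using Finv_ex[of s] fpos by auto

lemma u_ge: "eventually (\<lambda>t. S \<le> u t) at_top"
  using ulim unfolding filterlim_at_top by blast

lemma u_upper: "t \<ge> 1 \<Longrightarrow> u t \<le> u 1 + (t - 1)"
proof (cases "t = 1")
  case False
  assume t: "t \<ge> 1"
  hence t1: "1 < t" using False by simp
  obtain z where z: "1 < z" "z < t" "u t - u 1 = (t - 1) * (1 - g z / f (Finv f (u z)))"
    using MVT2[OF t1, of u "\<lambda>z. 1 - g z / f (Finv f (u z))"] du by force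
  have "g z / f (Finv f (u z)) > 0" using gpos phipos z by auto
  hence "(t - 1) * (1 - g z / f (Finv f (u z))) \<le> (t - 1) * 1" using t1 by (intro mult_left_mono) auto
  thus ?thesis using z by argo
qed simp

lemma case_i:
  assumes psi: "((\<lambda>t. g t / f (Finv f t)) \<longlongrightarrow> 0) at_top"
  shows "((\<lambda>t. u t / t) \<longlongrightarrow> 1) at_top"
proof (rule order_tendstoI)
  fix a :: real assume a: "a < 1"
  show "eventually (\<lambda>t. a < u t / t) at_top"
  proof (cases "a < 0")
    case True
    have "eventually (\<lambda>t. 0 \<le> u t \<and> t > 0) at_top"
      using u_ge[of 0] eventually_gt_at_top[of 0] by eventually_elim auto
    thus ?thesis
    proof eventually_elim
      case (elim t) hence "0 \<le> u t / t" by simp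
      thus ?case using True by linarith
    qed
  next
    case False
    define c where "c = (1 + a) / 2"
    have c: "0 < c" "c < 1" "a < c" using a False unfolding c_def by auto
    obtain S where S: "S \<ge> 0" "\<forall>s s'. S \<le> s' \<and> s' \<le> s \<longrightarrow> f (Finv f s) \<le> (1 + 1) * f (Finv f s')"
      using AD_phi[of 1] by auto
    have ps: "eventually (\<lambda>t. g t / f (Finv f t) < (1 - c) / 4) at_top"
      using c by (intro order_tendstoD(2)[OF psi]) auto
    have "eventually (\<lambda>t. S \<le> u t \<and> g t / f (Finv f t) < (1 - c) / 4 \<and> 1 \<le> t) at_top"
      using u_ge[of S] ps eventually_ge_at_top[of 1] by eventually_elim auto
    then obtain T where T: "\<And>t. t \<ge> T \<Longrightarrow> S \<le> u t \<and> g t / f (Finv f t) < (1 - c) / 4 \<and> 1 \<le> t"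
      unfolding eventually_at_top_linorder by blast
    have "eventually (\<lambda>t. c * t - u t < 0) at_top"
    proof (rule barrier[where w' = "\<lambda>t. c - (1 - g t / f (Finv f (u t)))" and T = T and \<kappa> = "(1 - c) / 2"])
      fix t assume t: "t > T"
      have "t > 0" using T[of t] t by auto
      thus "((\<lambda>t. c * t - u t) has_real_derivative c - (1 - g t / f (Finv f (u t)))) (at t)"
        by (auto intro!: derivative_eq_intros du)
    next
      fix t assume t: "t > T" and w: "0 \<le> c * t - u t"
      have Tt: "S \<le> u t" "g t / f (Finv f t) < (1 - c) / 4" "1 \<le> t" using T[of t] t by auto
      have ut: "u t \<le> t" using w c Tt by (smt (verit) mult_le_cancel_right1)
      have A: "f (Finv f t) > 0" using phi_pos Tt by auto
      have B: "f (Finv f (u t)) > 0" using phipos Tt by auto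
      have AB: "f (Finv f t) \<le> 2 * f (Finv f (u t))" using S Tt ut by auto
      have "g t / f (Finv f (u t)) = (2 * g t) / (2 * f (Finv f (u t)))" by simp
      also have "\<dots> \<le> (2 * g t) / f (Finv f t)" using gpos[of t] Tt A AB by (intro frac_le) auto
      also have "\<dots> = 2 * (g t / f (Finv f t))" by simp
      also have "\<dots> < (1 - c) / 2" using Tt by linarith
      finally show "c - (1 - g t / f (Finv f (u t))) \<le> - ((1 - c) / 2)" by argo
    qed (use c in auto)
    thus ?thesis using eventually_gt_at_top[of 0]
    proof eventually_elim
      case (elim t)
      hence "c * t < u t" by simp
      hence "c < u t / t" using elim by (simp add: less_divide_eq)
      thus ?case using c by linarith
    qed
  qed
next
  fix b :: real assume b: "1 < b"
  define M where "M = max 1 (\<bar>u 1 - 1\<bar> / (b - 1)) + 1"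
  show "eventually (\<lambda>t. u t / t < b) at_top"
    unfolding eventually_at_top_linorder
  proof (intro exI[of _ M] allI impI)
    fix t assume t: "M \<le> t"
    have t1: "t \<ge> 1" "t > 0" using t unfolding M_def by auto
    have "\<bar>u 1 - 1\<bar> / (b - 1) < t" using t unfolding M_def by auto
    hence "\<bar>u 1 - 1\<bar> < t * (b - 1)" using b by (simp add: divide_less_eq)
    hence "u 1 + (t - 1) < b * t" by (simp add: algebra_simps abs_less_iff)
    hence "u t < b * t" using u_upper[OF t1(1)] by linarith
    thus "u t / t < b" using t1 by (simp add: divide_less_eq)
  qed
qed

end

lemma ineq_lower:
  fixes A B C Pa Pr l \<delta> G :: real
  assumes pos: "A > 0" "B > 0" "C > 0" "Pa > 0" "Pr > 0" "l > 0" "0 < \<delta>" "\<delta> < 1" "G > 0"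
    and h1: "C \<le> (1 + \<delta>) * B" and h2: "(1 - \<delta>) * Pa * A < C" and h3: "G < l * (1 + \<delta>) * A"
    and hp: "(Pr / Pa) * (1 + \<delta>)^2 \<le> 1 - \<delta>"
  shows "G / B < l / Pr"
proof -
  have k1: "Pr * (1 + \<delta>)^2 \<le> (1 - \<delta>) * Pa"
    using hp pos by (simp add: field_simps)
  have "G * (Pr * (1 + \<delta>)^2) \<le> G * ((1 - \<delta>) * Pa)" using k1 pos by (intro mult_left_mono) auto
  also have "G * ((1 - \<delta>) * Pa) < (l * (1 + \<delta>) * A) * ((1 - \<delta>) * Pa)"
    using h3 pos by (intro mult_strict_right_mono) auto
  also have "\<dots> = (l * (1 + \<delta>)) * ((1 - \<delta>) * Pa * A)" by (simp add: algebra_simps)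
  also have "\<dots> < (l * (1 + \<delta>)) * C" using h2 pos by (intro mult_strict_left_mono) auto
  also have "\<dots> \<le> (l * (1 + \<delta>)) * ((1 + \<delta>) * B)" using h1 pos by (intro mult_left_mono) auto
  finally have "(G * Pr) * (1 + \<delta>)^2 < (l * B) * (1 + \<delta>)^2" by (simp add: power2_eq_square algebra_simps)
  hence "G * Pr < l * B" using pos by (simp add: mult_less_cancel_right)
  thus ?thesis using pos by (simp add: field_simps)
qed

lemma ineq_upper:
  fixes A B C Pb Pr l \<delta> G :: real
  assumes pos: "A > 0" "B > 0" "C > 0" "Pb > 0" "Pr > 0" "l > 0" "0 < \<delta>" "\<delta> < 1" "G > 0"
    and h1: "B \<le> (1 + \<delta>) * C" and h2: "C < (1 + \<delta>) * Pb * A" and h3: "l * (1 - \<delta>) * A < G"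
    and hp: "(Pb / Pr) * (1 + \<delta>)^2 \<le> 1 - \<delta>"
  shows "l / Pr < G / B"
proof -
  have k1: "Pb * (1 + \<delta>)^2 \<le> (1 - \<delta>) * Pr"
    using hp pos by (simp add: field_simps)
  have "l * B \<le> l * ((1 + \<delta>) * C)" using h1 pos by (intro mult_left_mono) auto
  also have "\<dots> < l * ((1 + \<delta>) * ((1 + \<delta>) * Pb * A))" using h2 pos by (intro mult_strict_left_mono) auto
  also have "\<dots> = (l * A) * (Pb * (1 + \<delta>)^2)" by (simp add: power2_eq_square algebra_simps)
  also have "\<dots> \<le> (l * A) * ((1 - \<delta>) * Pr)" using k1 pos by (intro mult_left_mono) auto
  also have "\<dots> = Pr * (l * (1 - \<delta>) * A)" by (simp add: algebra_simps)
  also have "\<dots> < Pr * G" using h3 pos by (intro mult_strict_left_mono) auto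
  finally have "l * B < G * Pr" by (simp add: algebra_simps)
  thus ?thesis using pos by (simp add: field_simps)
qed

context sol begin

lemma Pw_pos: "x > 0 \<Longrightarrow> x powr (- \<beta> / (\<beta> - 1)) > 0" by simp

lemma Pw_dec: "0 < x \<Longrightarrow> x < y \<Longrightarrow> y powr (- \<beta> / (\<beta> - 1)) < x powr (- \<beta> / (\<beta> - 1))"
  using beta by (intro powr_less_mono2_neg) (auto simp: divide_neg_pos)

lemma case_ii:
  assumes psi: "((\<lambda>t. g t / f (Finv f t)) \<longlongrightarrow> l) at_top" and l: "l > 0"
    and r: "0 < r" "r < 1" "(1 - r) * r powr (- \<beta> / (\<beta> - 1)) = l"
  shows "((\<lambda>t. u t / t) \<longlongrightarrow> r) at_top"
proof (rule order_tendstoI)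
  define Pr where "Pr = r powr (- \<beta> / (\<beta> - 1))"
  have Pr: "Pr > 0" using r unfolding Pr_def by simp
  have lPr: "l / Pr = 1 - r" using r Pr unfolding Pr_def by (auto simp: field_simps)
  fix a assume a: "a < r"
  show "eventually (\<lambda>t. a < u t / t) at_top"
  proof (cases "a \<le> 0")
    case True
    show ?thesis using u_ge[of 1] eventually_gt_at_top[of 0]
    proof eventually_elim
      case (elim t) hence "0 < u t / t" by simp
      thus ?case using True by argo
    qed
  next
    case False
    hence a0: "a > 0" by simp
    define Pa where "Pa = a powr (- \<beta> / (\<beta> - 1))"
    have Pa: "Pa > 0" "Pr < Pa" unfolding Pa_def Pr_def using a0 Pw_dec[OF a0 a] by auto
    have p: "0 < Pr / Pa" "Pr / Pa < 1" using Pa Pr by auto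
    obtain \<delta> where d: "\<delta> > 0" "\<delta> < 1" "(Pr / Pa) * (1 + \<delta>)^2 \<le> 1 - \<delta>"
      using small_delta[OF p] by auto
    obtain S where S: "S \<ge> 0" "\<forall>s s'. S \<le> s' \<and> s' \<le> s \<longrightarrow> f (Finv f s) \<le> (1 + \<delta>) * f (Finv f s')"
      using AD_phi[OF d(1)] by auto
    have e1: "eventually (\<lambda>t. (1 - \<delta>) * Pa < f (Finv f (a * t)) / f (Finv f t)) at_top"
      using Pa d unfolding Pa_def by (intro order_tendstoD(1)[OF Phi1[OF a0]]) auto
    have e2: "eventually (\<lambda>t. g t / f (Finv f t) < l * (1 + \<delta>)) at_top"
      using l d by (intro order_tendstoD(2)[OF psi]) auto
    have "eventually (\<lambda>t. S \<le> u t \<and> (1 - \<delta>) * Pa < f (Finv f (a * t)) / f (Finv f t)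
        \<and> g t / f (Finv f t) < l * (1 + \<delta>) \<and> 1 \<le> t \<and> S / a \<le> t) at_top"
      using u_ge[of S] e1 e2 eventually_ge_at_top[of 1] eventually_ge_at_top[of "S / a"]
      by eventually_elim auto
    then obtain T where T: "\<And>t. t \<ge> T \<Longrightarrow> S \<le> u t \<and> (1 - \<delta>) * Pa < f (Finv f (a * t)) / f (Finv f t)
        \<and> g t / f (Finv f t) < l * (1 + \<delta>) \<and> 1 \<le> t \<and> S / a \<le> t"
      unfolding eventually_at_top_linorder by blast
    have "eventually (\<lambda>t. a * t - u t < 0) at_top"
    proof (rule barrier[where w' = "\<lambda>t. a - (1 - g t / f (Finv f (u t)))" and T = T and \<kappa> = "r - a"])
      fix t assume t: "t > T"
      have "t > 0" using T[of t] t by auto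
      thus "((\<lambda>t. a * t - u t) has_real_derivative a - (1 - g t / f (Finv f (u t)))) (at t)"
        by (auto intro!: derivative_eq_intros du)
    next
      fix t assume t: "t > T" and w: "0 \<le> a * t - u t"
      note Tt = T[of t]
      have t1: "t \<ge> 1" "S \<le> u t" using Tt t by auto
      have at: "S \<le> a * t" using Tt t a0 by (auto simp: field_simps)
      have A: "f (Finv f t) > 0" using phi_pos t1 by auto
      have B: "f (Finv f (u t)) > 0" using phipos t1 by auto
      have C: "f (Finv f (a * t)) > 0" using phi_pos a0 t1 by auto
      have h1: "f (Finv f (a * t)) \<le> (1 + \<delta>) * f (Finv f (u t))" using S t1 w by auto
      have h2: "(1 - \<delta>) * Pa * f (Finv f t) < f (Finv f (a * t))" using Tt t A by (simp add: less_divide_eq)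
      have h3: "g t < l * (1 + \<delta>) * f (Finv f t)" using Tt t A by (simp add: divide_less_eq mult.assoc)
      have "g t / f (Finv f (u t)) < l / Pr"
        by (rule ineq_lower[OF A B C Pa(1) Pr l d(1) d(2) _ h1 h2 h3 d(3)]) (use gpos t1 in auto)
      thus "a - (1 - g t / f (Finv f (u t))) \<le> - (r - a)" using lPr by argo
    qed (use a in auto)
    thus ?thesis using eventually_gt_at_top[of 0]
    proof eventually_elim
      case (elim t)
      hence "a * t < u t" by simp
      thus ?case using elim by (simp add: less_divide_eq)
    qed
  qed
next
  define Pr where "Pr = r powr (- \<beta> / (\<beta> - 1))"
  have Pr: "Pr > 0" using r unfolding Pr_def by simp
  have lPr: "l / Pr = 1 - r" using r Pr unfolding Pr_def by (auto simp: field_simps)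
  fix b assume b: "r < b"
  hence b0: "b > 0" using r by simp
  define Pb where "Pb = b powr (- \<beta> / (\<beta> - 1))"
  have Pb: "Pb > 0" "Pb < Pr" unfolding Pb_def Pr_def using b0 Pw_dec[OF r(1) b] by auto
  have p: "0 < Pb / Pr" "Pb / Pr < 1" using Pb Pr by auto
  obtain \<delta> where d: "\<delta> > 0" "\<delta> < 1" "(Pb / Pr) * (1 + \<delta>)^2 \<le> 1 - \<delta>"
    using small_delta[OF p] by auto
  obtain S where S: "S \<ge> 0" "\<forall>s s'. S \<le> s' \<and> s' \<le> s \<longrightarrow> f (Finv f s) \<le> (1 + \<delta>) * f (Finv f s')"
    using AD_phi[OF d(1)] by auto
  have e1: "eventually (\<lambda>t. f (Finv f (b * t)) / f (Finv f t) < (1 + \<delta>) * Pb) at_top"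
    using Pb d unfolding Pb_def by (intro order_tendstoD(2)[OF Phi1[OF b0]]) auto
  have e2: "eventually (\<lambda>t. l * (1 - \<delta>) < g t / f (Finv f t)) at_top"
    using l d by (intro order_tendstoD(1)[OF psi]) auto
  have "eventually (\<lambda>t. S \<le> u t \<and> f (Finv f (b * t)) / f (Finv f t) < (1 + \<delta>) * Pb
      \<and> l * (1 - \<delta>) < g t / f (Finv f t) \<and> 1 \<le> t \<and> S / b \<le> t) at_top"
    using u_ge[of S] e1 e2 eventually_ge_at_top[of 1] eventually_ge_at_top[of "S / b"]
    by eventually_elim auto
  then obtain T where T: "\<And>t. t \<ge> T \<Longrightarrow> S \<le> u t \<and> f (Finv f (b * t)) / f (Finv f t) < (1 + \<delta>) * Pb
      \<and> l * (1 - \<delta>) < g t / f (Finv f t) \<and> 1 \<le> t \<and> S / b \<le> t"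
    unfolding eventually_at_top_linorder by blast
  have "eventually (\<lambda>t. u t - b * t < 0) at_top"
  proof (rule barrier[where w' = "\<lambda>t. (1 - g t / f (Finv f (u t))) - b" and T = T and \<kappa> = "b - r"])
    fix t assume t: "t > T"
    have "t > 0" using T[of t] t by auto
    thus "((\<lambda>t. u t - b * t) has_real_derivative (1 - g t / f (Finv f (u t))) - b) (at t)"
      by (auto intro!: derivative_eq_intros du)
  next
    fix t assume t: "t > T" and w: "0 \<le> u t - b * t"
    note Tt = T[of t]
    have t1: "t \<ge> 1" "S \<le> u t" using Tt t by auto
    have bt: "S \<le> b * t" using Tt t b0 by (auto simp: field_simps)
    have A: "f (Finv f t) > 0" using phi_pos t1 by auto
    have B: "f (Finv f (u t)) > 0" using phipos t1 by auto
    have C: "f (Finv f (b * t)) > 0" using phi_pos b0 t1 by auto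
    have h1: "f (Finv f (u t)) \<le> (1 + \<delta>) * f (Finv f (b * t))" using S bt w by auto
    have h2: "f (Finv f (b * t)) < (1 + \<delta>) * Pb * f (Finv f t)" using Tt t A by (simp add: divide_less_eq)
    have h3: "l * (1 - \<delta>) * f (Finv f t) < g t" using Tt t A by (simp add: less_divide_eq)
    have "l / Pr < g t / f (Finv f (u t))"
      by (rule ineq_upper[OF A B C Pb(1) Pr l d(1) d(2) _ h1 h2 h3 d(3)]) (use gpos t1 in auto)
    thus "(1 - g t / f (Finv f (u t))) - b \<le> - (b - r)" using lPr by argo
  qed (use b in auto)
  thus "eventually (\<lambda>t. u t / t < b) at_top" using eventually_gt_at_top[of 0]
  proof eventually_elim
    case (elim t)
    hence "u t < b * t" by simp
    thus ?case using elim by (simp add: divide_less_eq)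
  qed
qed

end

context sol begin

lemma iii_small:
  assumes psi: "\<And>M. eventually (\<lambda>t. M < g t / f (Finv f t)) at_top"
    and d0: "\<delta>0 > 0"
  shows "eventually (\<lambda>t. u t < \<delta>0 * t) at_top"
proof -
  define P0 where "P0 = \<delta>0 powr (- \<beta> / (\<beta> - 1))"
  have P0: "P0 > 0" using d0 unfolding P0_def by simp
  obtain S where S: "S \<ge> 0" "\<forall>s s'. S \<le> s' \<and> s' \<le> s \<longrightarrow> f (Finv f s) \<le> (1 + 1) * f (Finv f s')"
    using AD_phi[of 1] by auto
  have e1: "eventually (\<lambda>t. f (Finv f (\<delta>0 * t)) / f (Finv f t) < 2 * P0) at_top"
    using P0 unfolding P0_def by (intro order_tendstoD(2)[OF Phi1[OF d0]]) auto
  have "eventually (\<lambda>t. S \<le> u t \<and> f (Finv f (\<delta>0 * t)) / f (Finv f t) < 2 * P0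
      \<and> 8 * P0 < g t / f (Finv f t) \<and> 1 \<le> t \<and> S / \<delta>0 \<le> t) at_top"
    using u_ge[of S] e1 psi[of "8 * P0"] eventually_ge_at_top[of 1] eventually_ge_at_top[of "S / \<delta>0"]
    by eventually_elim auto
  then obtain T where T: "\<And>t. t \<ge> T \<Longrightarrow> S \<le> u t \<and> f (Finv f (\<delta>0 * t)) / f (Finv f t) < 2 * P0
      \<and> 8 * P0 < g t / f (Finv f t) \<and> 1 \<le> t \<and> S / \<delta>0 \<le> t"
    unfolding eventually_at_top_linorder by blast
  have "eventually (\<lambda>t. u t - \<delta>0 * t < 0) at_top"
  proof (rule barrier[where w' = "\<lambda>t. (1 - g t / f (Finv f (u t))) - \<delta>0" and T = T and \<kappa> = 1])
    fix t assume t: "t > T"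
    have "t > 0" using T[of t] t by auto
    thus "((\<lambda>t. u t - \<delta>0 * t) has_real_derivative (1 - g t / f (Finv f (u t))) - \<delta>0) (at t)"
      by (auto intro!: derivative_eq_intros du)
  next
    fix t assume t: "t > T" and w: "0 \<le> u t - \<delta>0 * t"
    note Tt = T[of t]
    have t1: "t \<ge> 1" "S \<le> u t" using Tt t by auto
    have dt: "S \<le> \<delta>0 * t" using Tt t d0 by (auto simp: field_simps)
    have A: "f (Finv f t) > 0" using phi_pos t1 by auto
    have B: "f (Finv f (u t)) > 0" using phipos t1 by auto
    have h1: "f (Finv f (u t)) \<le> 2 * f (Finv f (\<delta>0 * t))" using S dt w by auto
    have h2: "f (Finv f (\<delta>0 * t)) < 2 * P0 * f (Finv f t)" using Tt t A by (simp add: divide_less_eq)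
    have h3: "8 * P0 * f (Finv f t) < g t" using Tt t A by (simp add: less_divide_eq)
    have "2 * f (Finv f (u t)) < g t" using h1 h2 h3 by argo
    hence "2 < g t / f (Finv f (u t))" using B by (simp add: less_divide_eq)
    thus "(1 - g t / f (Finv f (u t))) - \<delta>0 \<le> - 1" using d0 by argo
  qed auto
  thus ?thesis by eventually_elim simp
qed

lemma mvt_low:
  assumes c0: "0 < c" and ct: "c < t1" and rate: "\<And>s. c < s \<Longrightarrow> s < t1 \<Longrightarrow> 1 - g s / f (Finv f (u s)) \<ge> \<kappa>"
  shows "u t1 - u c \<ge> \<kappa> * (t1 - c)"
proof -
  obtain z where z: "c < z" "z < t1" "u t1 - u c = (t1 - c) * (1 - g z / f (Finv f (u z)))"
    using MVT2[OF ct, of u "\<lambda>z. 1 - g z / f (Finv f (u z))"] du c0 by force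
  have "(t1 - c) * \<kappa> \<le> (t1 - c) * (1 - g z / f (Finv f (u z)))" using rate z ct by (intro mult_left_mono) auto
  thus ?thesis using z by (simp add: mult.commute)
qed

lemma mvt_up:
  assumes c0: "0 < c" and ct: "c < t1" and rate: "\<And>s. c < s \<Longrightarrow> s < t1 \<Longrightarrow> 1 - g s / f (Finv f (u s)) \<le> - \<kappa>"
  shows "u t1 - u c \<le> - \<kappa> * (t1 - c)"
proof -
  obtain z where z: "c < z" "z < t1" "u t1 - u c = (t1 - c) * (1 - g z / f (Finv f (u z)))"
    using MVT2[OF ct, of u "\<lambda>z. 1 - g z / f (Finv f (u z))"] du c0 by force
  have "(t1 - c) * (1 - g z / f (Finv f (u z))) \<le> (t1 - c) * (- \<kappa>)" using rate z ct by (intro mult_left_mono) auto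
  thus ?thesis using z by (simp add: mult.commute)
qed

lemma W_cont: "0 < a \<Longrightarrow> continuous_on {a..b} (\<lambda>t. f (Finv f (u t)) - k * g t)"
  by (intro continuous_intros continuous_on_subset[OF pu_cont] continuous_on_subset[OF gc]) auto

lemma W_cont': "0 < a \<Longrightarrow> continuous_on {a..b} (\<lambda>t. k * g t - f (Finv f (u t)))"
  by (intro continuous_intros continuous_on_subset[OF pu_cont] continuous_on_subset[OF gc]) auto

end

context sol begin

lemma iii_upper:
  assumes psi: "\<And>M. eventually (\<lambda>t. M < g t / f (Finv f t)) at_top"
    and eps: "0 < \<epsilon>" "\<epsilon> \<le> 1"
  shows "eventually (\<lambda>t. f (Finv f (u t)) \<le> (1 + \<epsilon>) * g t) at_top"
proof -
  define e where "e = \<epsilon> / 8"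
  have e: "0 < e" "e \<le> 1/8" "e \<le> \<epsilon>" using eps unfolding e_def by auto
  have ee: "e * e \<le> e" using e by (intro mult_left_le_one_le) auto
  have "e * e \<le> 1" using ee e by argo
  hence "e * (e * e) \<le> e * 1" using e by (intro mult_left_mono) auto
  hence eee: "e * (e * e) \<le> e" by simp
  have cube: "(1 + e) * ((1 + e) * (1 + e)) \<le> 1 + \<epsilon>"
  proof -
    have "(1 + e) * ((1 + e) * (1 + e)) = 1 + 3 * e + 3 * (e * e) + e * (e * e)" by (simp add: algebra_simps)
    also have "\<dots> \<le> 1 + 7 * e" using ee eee by argo
    also have "\<dots> \<le> 1 + \<epsilon>" unfolding e_def using eps by simp
    finally show ?thesis .
  qed
  define \<kappa> where "\<kappa> = e / (1 + e)"
  have k: "0 < \<kappa>" "\<kappa> = 1 - 1 / (1 + e)" using e unfolding \<kappa>_def by (auto simp: field_simps)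
  obtain \<eta> Tg where eta: "\<eta> > 0" "\<eta> < 1" "Tg > 0"
    and G: "\<forall>t\<ge>Tg. \<forall>lam. 1 - \<eta> \<le> lam \<and> lam \<le> 1 \<longrightarrow> (1 - e) * g t \<le> g (lam * t) \<and> g (lam * t) \<le> (1 + e) * g t"
    using g_local[OF gc gpos grv th e(1)] by blast
  define \<delta>0 where "\<delta>0 = \<kappa> * \<eta> / 2"
  have d0: "\<delta>0 > 0" "\<delta>0 < \<kappa> / 2" using k eta unfolding \<delta>0_def by (auto simp: field_simps)
  obtain S where S: "S \<ge> 0" "\<forall>s s'. S \<le> s' \<and> s' \<le> s \<longrightarrow> f (Finv f s) \<le> (1 + e) * f (Finv f s')"
    using AD_phi[OF e(1)] by auto
  obtain T0 where T0: "\<And>t. t \<ge> T0 \<Longrightarrow> S \<le> u t"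
    using u_ge[of S] unfolding eventually_at_top_linorder by blast
  define T where "T = max (max Tg 1) T0"
  have T: "T \<ge> Tg" "T \<ge> 1" "\<And>t. t \<ge> T \<Longrightarrow> S \<le> u t \<and> 0 \<le> u t" using T0 S unfolding T_def by force+
  obtain T1 where T1: "\<And>t. t \<ge> T1 \<Longrightarrow> u t < \<delta>0 * t"
    using iii_small[OF psi d0(1)] unfolding eventually_at_top_linorder by blast
  have rate: "1 - g s / f (Finv f (u s)) \<ge> \<kappa>" if s: "s > 0" "f (Finv f (u s)) - (1 + e) * g s > 0" for s
  proof -
    have B: "f (Finv f (u s)) > 0" using phipos s by auto
    have gs: "g s > 0" using gpos s by auto
    have "g s / f (Finv f (u s)) \<le> g s / ((1 + e) * g s)" using s gs e B by (intro divide_left_mono) auto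
    also have "\<dots> = 1 / (1 + e)" using gs by simp
    finally show ?thesis using k by argo
  qed
  show ?thesis unfolding eventually_at_top_linorder
  proof (intro exI[of _ "max T1 (2 * T)"] allI impI)
    fix t1 assume t1: "max T1 (2 * T) \<le> t1"
    have t1T: "t1 \<ge> T" "T < t1" "t1 \<ge> T1" "t1 > 0" using t1 T by auto
    show "f (Finv f (u t1)) \<le> (1 + \<epsilon>) * g t1"
    proof (rule ccontr)
      assume H0: "\<not> ?thesis"
      hence H: "(1 + \<epsilon>) * g t1 < f (Finv f (u t1))" by simp
      have g1: "g t1 > 0" using gpos t1T by auto
      have "(1 + e) * g t1 \<le> (1 + \<epsilon>) * g t1" using e g1 by (intro mult_right_mono) auto
      hence Wt1: "f (Finv f (u t1)) - (1 + e) * g t1 > 0" using H by argo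
      have ut1: "u t1 < \<delta>0 * t1" using T1 t1T by auto
      show False
      proof (cases "\<exists>a. T \<le> a \<and> a \<le> t1 \<and> f (Finv f (u a)) - (1 + e) * g a \<le> 0")
        case False
        have "u t1 - u T \<ge> \<kappa> * (t1 - T)"
        proof (rule mvt_low)
          show "0 < T" using T by auto
          show "T < t1" by (rule t1T(2))
          fix s assume s: "T < s" "s < t1"
          hence "\<not> (f (Finv f (u s)) - (1 + e) * g s \<le> 0)" using False by auto
          thus "\<kappa> \<le> 1 - g s / f (Finv f (u s))" using s T by (intro rate) auto
        qed
        moreover have "u T \<ge> 0" using T by auto
        moreover have "\<kappa> * (t1 - T) \<ge> \<kappa> * (t1 / 2)" using t1 k by (intro mult_left_mono) auto
        moreover have "\<delta>0 * t1 \<le> (\<kappa> / 2) * t1" using d0 t1T by (intro mult_right_mono) auto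
        ultimately show False using ut1 by argo
      next
        case True
        then obtain a where a: "T \<le> a" "a \<le> t1" "f (Finv f (u a)) - (1 + e) * g a \<le> 0" by blast
        have at1: "a < t1" using a Wt1 by (cases "a = t1") auto
        have a0: "a > 0" using a T by auto
        obtain c where c: "a \<le> c" "c < t1" "f (Finv f (u c)) - (1 + e) * g c \<le> 0"
          "\<forall>s. c < s \<and> s \<le> t1 \<longrightarrow> f (Finv f (u s)) - (1 + e) * g s > 0"
          using last_time[OF at1 W_cont[OF a0] a(3) Wt1] by blast
        have c0: "c > 0" "c \<ge> T" using a0 a c by auto
        have mv: "u t1 - u c \<ge> \<kappa> * (t1 - c)"
        proof (rule mvt_low[OF c0(1) c(2)])
          fix s assume s: "c < s" "s < t1"
          thus "\<kappa> \<le> 1 - g s / f (Finv f (u s))" using c c0 by (intro rate) auto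
        qed
        have uc: "u c \<ge> 0" "S \<le> u c" using T c0 by auto
        have "\<kappa> * (t1 - c) < \<kappa> * (\<eta> * t1)"
        proof -
          have "\<kappa> * (t1 - c) < \<delta>0 * t1" using mv uc ut1 by argo
          also have "\<delta>0 * t1 = \<kappa> * (\<eta> * t1) / 2" unfolding \<delta>0_def by simp
          also have "\<dots> \<le> \<kappa> * (\<eta> * t1)" using k eta t1T by simp
          finally show ?thesis .
        qed
        hence "t1 - c < \<eta> * t1" using k by simp
        hence lam: "1 - \<eta> \<le> c / t1" "c / t1 \<le> 1" using t1T c by (auto simp: field_simps)
        have tg: "Tg \<le> t1" using t1T T(1) by argo
        have "g ((c / t1) * t1) \<le> (1 + e) * g t1" using G[rule_format, OF tg conjI[OF lam(1) lam(2)]] by blast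
        moreover have "(c / t1) * t1 = c" using t1T by simp
        ultimately have gc1: "g c \<le> (1 + e) * g t1" by simp
        have "\<kappa> * (t1 - c) \<ge> 0" using k c by simp
        hence "u c \<le> u t1" using mv by argo
        hence "f (Finv f (u t1)) \<le> (1 + e) * f (Finv f (u c))" using S uc by auto
        also have "\<dots> \<le> (1 + e) * ((1 + e) * g c)" using c e by (intro mult_left_mono) auto
        also have "\<dots> \<le> (1 + e) * ((1 + e) * ((1 + e) * g t1))" using gc1 e by (intro mult_left_mono) auto
        also have "\<dots> = ((1 + e) * ((1 + e) * (1 + e))) * g t1" by (simp add: algebra_simps)
        also have "\<dots> \<le> (1 + \<epsilon>) * g t1" using cube g1 by (intro mult_right_mono) auto
        finally show False using H by argo
      qed
    qed
  qed
qed

end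

context sol begin

lemma iii_lower:
  assumes psi: "\<And>M. eventually (\<lambda>t. M < g t / f (Finv f t)) at_top"
    and eps: "0 < \<epsilon>" "\<epsilon> \<le> 1"
  shows "eventually (\<lambda>t. (1 - \<epsilon>) * g t \<le> f (Finv f (u t))) at_top"
proof -
  define e where "e = \<epsilon> / 3"
  have e: "0 < e" "e \<le> 1/3" "e \<le> \<epsilon>" using eps unfolding e_def by auto
  have ee: "e * e \<le> e" using e by (intro mult_left_le_one_le) auto
  have e3: "\<epsilon> = 3 * e" unfolding e_def by simp
  have sq: "1 - 2 * e \<le> (1 - e) * (1 - e)"
  proof -
    have "(1 - e) * (1 - e) = 1 - 2 * e + e * e" by (simp add: algebra_simps)
    moreover have "e * e \<ge> 0" by simp
    ultimately show ?thesis by argo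
  qed
  have "(1 - e) * (1 - 2 * e) \<le> (1 - e) * ((1 - e) * (1 - e))" using sq e by (intro mult_left_mono) auto
  moreover have "(1 - e) * (1 - 2 * e) = 1 - 3 * e + 2 * (e * e)" by (simp add: algebra_simps)
  moreover have "e * e \<ge> 0" by simp
  ultimately have cube: "1 - \<epsilon> \<le> (1 - e) * ((1 - e) * (1 - e))" using e3 by argo
  define \<kappa> where "\<kappa> = e / (1 - e)"
  have k: "0 < \<kappa>" "- \<kappa> = 1 - 1 / (1 - e)" using e unfolding \<kappa>_def by (auto simp: field_simps)
  obtain \<eta> Tg where eta: "\<eta> > 0" "\<eta> < 1" "Tg > 0"
    and G: "\<forall>t\<ge>Tg. \<forall>lam. 1 - \<eta> \<le> lam \<and> lam \<le> 1 \<longrightarrow> (1 - e) * g t \<le> g (lam * t) \<and> g (lam * t) \<le> (1 + e) * g t"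
    using g_local[OF gc gpos grv th e(1)] by blast
  define \<delta>0 where "\<delta>0 = \<kappa> * \<eta> / 2"
  have d0: "\<delta>0 > 0" using k eta unfolding \<delta>0_def by auto
  obtain S where S: "S \<ge> 0" "\<forall>s s'. S \<le> s' \<and> s' \<le> s \<longrightarrow> f (Finv f s) \<le> (1 + e) * f (Finv f s')"
    using AD_phi[OF e(1)] by auto
  obtain T0 where T0: "\<And>t. t \<ge> T0 \<Longrightarrow> S \<le> u t"
    using u_ge[of S] unfolding eventually_at_top_linorder by blast
  obtain T1' where T1': "\<And>t. t \<ge> T1' \<Longrightarrow> u t < \<delta>0 * t"
    using iii_small[OF psi d0(1)] unfolding eventually_at_top_linorder by blast
  define T1 where "T1 = max (max (max Tg 1) T0) T1'"
  have T1: "T1 \<ge> Tg" "T1 \<ge> 1" "\<And>t. t \<ge> T1 \<Longrightarrow> S \<le> u t \<and> 0 \<le> u t \<and> u t < \<delta>0 * t"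
    using T0 T1' S unfolding T1_def by force+
  obtain T2 where T2: "\<And>t. t \<ge> T2 \<Longrightarrow> u T1 + 1 \<le> u t"
    using u_ge[of "u T1 + 1"] unfolding eventually_at_top_linorder by blast
  have rate: "1 - g s / f (Finv f (u s)) \<le> - \<kappa>" if s: "s > 0" "(1 - e) * g s - f (Finv f (u s)) > 0" for s
  proof -
    have B: "f (Finv f (u s)) > 0" using phipos s by auto
    have gs: "g s > 0" using gpos s by auto
    have "g s / ((1 - e) * g s) \<le> g s / f (Finv f (u s))" using s gs e B by (intro divide_left_mono) auto
    moreover have "g s / ((1 - e) * g s) = 1 / (1 - e)" using gs by simp
    ultimately show ?thesis using k by argo
  qed
  show ?thesis unfolding eventually_at_top_linorder
  proof (intro exI[of _ "max T2 (T1 + 1)"] allI impI)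
    fix t1 assume t1: "max T2 (T1 + 1) \<le> t1"
    have t1T: "T1 < t1" "t1 \<ge> T2" "t1 > 0" using t1 T1 by auto
    show "(1 - \<epsilon>) * g t1 \<le> f (Finv f (u t1))"
    proof (rule ccontr)
      assume H0: "\<not> ?thesis"
      hence H: "f (Finv f (u t1)) < (1 - \<epsilon>) * g t1" by simp
      have g1: "g t1 > 0" using gpos t1T by auto
      have "(1 - \<epsilon>) * g t1 \<le> (1 - e) * g t1" using e g1 by (intro mult_right_mono) auto
      hence Wt1: "(1 - e) * g t1 - f (Finv f (u t1)) > 0" using H by argo
      have ut1: "0 \<le> u t1" "S \<le> u t1" using T1 t1T by auto
      show False
      proof (cases "\<exists>a. T1 \<le> a \<and> a \<le> t1 \<and> (1 - e) * g a - f (Finv f (u a)) \<le> 0")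
        case False
        have "u t1 - u T1 \<le> - \<kappa> * (t1 - T1)"
        proof (rule mvt_up)
          show "0 < T1" using T1 by auto
          show "T1 < t1" by (rule t1T(1))
          fix s assume s: "T1 < s" "s < t1"
          hence "\<not> ((1 - e) * g s - f (Finv f (u s)) \<le> 0)" using False by auto
          thus "1 - g s / f (Finv f (u s)) \<le> - \<kappa>" using s T1 by (intro rate) auto
        qed
        moreover have "\<kappa> * (t1 - T1) \<ge> 0" using k t1T by simp
        moreover have "u T1 + 1 \<le> u t1" using T2 t1T by auto
        ultimately show False by argo
      next
        case True
        then obtain a where a: "T1 \<le> a" "a \<le> t1" "(1 - e) * g a - f (Finv f (u a)) \<le> 0" by blast
        have at1: "a < t1" using a Wt1 by (cases "a = t1") auto
        have a0: "a > 0" using a T1 by auto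
        obtain c where c: "a \<le> c" "c < t1" "(1 - e) * g c - f (Finv f (u c)) \<le> 0"
          "\<forall>s. c < s \<and> s \<le> t1 \<longrightarrow> (1 - e) * g s - f (Finv f (u s)) > 0"
          using last_time[OF at1 W_cont'[OF a0] a(3) Wt1] by blast
        have c0: "c > 0" "c \<ge> T1" using a0 a c by auto
        have mv: "u t1 - u c \<le> - \<kappa> * (t1 - c)"
        proof (rule mvt_up[OF c0(1) c(2)])
          fix s assume s: "c < s" "s < t1"
          thus "1 - g s / f (Finv f (u s)) \<le> - \<kappa>" using c c0 by (intro rate) auto
        qed
        have uc: "u c < \<delta>0 * c" "S \<le> u c" using T1 c0 by auto
        have "\<delta>0 * c \<le> \<delta>0 * t1" using d0 c by (intro mult_left_mono) auto
        hence "\<kappa> * (t1 - c) < \<delta>0 * t1" using mv uc ut1 by argo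
        also have "\<delta>0 * t1 = \<kappa> * (\<eta> * t1) / 2" unfolding \<delta>0_def by simp
        also have "\<dots> \<le> \<kappa> * (\<eta> * t1)" using k eta t1T by simp
        finally have "t1 - c < \<eta> * t1" using k by simp
        hence lam: "1 - \<eta> \<le> c / t1" "c / t1 \<le> 1" using t1T c by (auto simp: field_simps)
        have tg: "Tg \<le> t1" using t1T T1(1) by argo
        have "(1 - e) * g t1 \<le> g ((c / t1) * t1)" using G[rule_format, OF tg conjI[OF lam(1) lam(2)]] by blast
        moreover have "(c / t1) * t1 = c" using t1T by simp
        ultimately have gc1: "(1 - e) * g t1 \<le> g c" by simp
        have "\<kappa> * (t1 - c) \<ge> 0" using k c by simp
        hence "u t1 \<le> u c" using mv by argo
        hence ad: "f (Finv f (u c)) \<le> (1 + e) * f (Finv f (u t1))" using S ut1 by auto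
        have B1: "f (Finv f (u t1)) > 0" using phipos t1T by auto
        have "(1 - e) * f (Finv f (u c)) \<le> (1 - e) * ((1 + e) * f (Finv f (u t1)))"
          using ad e by (intro mult_left_mono) auto
        also have "\<dots> = (1 - e * e) * f (Finv f (u t1))" by (simp add: algebra_simps)
        also have "\<dots> \<le> 1 * f (Finv f (u t1))" using B1 by (intro mult_right_mono) auto
        finally have P1: "(1 - e) * f (Finv f (u c)) \<le> f (Finv f (u t1))" by simp
        have "(1 - \<epsilon>) * g t1 \<le> ((1 - e) * ((1 - e) * (1 - e))) * g t1" using cube g1 by (intro mult_right_mono) auto
        also have "\<dots> = (1 - e) * ((1 - e) * ((1 - e) * g t1))" by (simp add: algebra_simps)
        also have "\<dots> \<le> (1 - e) * ((1 - e) * g c)" using gc1 e by (intro mult_left_mono) auto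
        also have "\<dots> \<le> (1 - e) * f (Finv f (u c))" using c e by (intro mult_left_mono) auto
        also have "\<dots> \<le> f (Finv f (u t1))" by (rule P1)
        finally have "(1 - \<epsilon>) * g t1 \<le> f (Finv f (u t1))" .
        thus False using H by argo
      qed
    qed
  qed
qed

end

context sol begin

lemma case_iii:
  assumes psi: "\<And>M. eventually (\<lambda>t. M < g t / f (Finv f t)) at_top"
  shows "((\<lambda>t. f (Finv f (u t)) / g t) \<longlongrightarrow> 1) at_top"
proof (rule order_tendstoI)
  fix a :: real assume a: "a < 1"
  define \<epsilon> where "\<epsilon> = min 1 ((1 - a) / 2)"
  have e: "0 < \<epsilon>" "\<epsilon> \<le> 1" using a unfolding \<epsilon>_def by auto
  have "\<epsilon> \<le> (1 - a) / 2" unfolding \<epsilon>_def by (rule min.cobounded2)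
  hence e3: "a < 1 - \<epsilon>" using a by argo
  note e = e e3
  show "eventually (\<lambda>t. a < f (Finv f (u t)) / g t) at_top"
    using iii_lower[OF psi e(1) e(2)] eventually_gt_at_top[of 0]
  proof eventually_elim
    case (elim t)
    have "g t > 0" using gpos elim by auto
    hence "1 - \<epsilon> \<le> f (Finv f (u t)) / g t" using elim by (simp add: le_divide_eq)
    thus ?case using e by argo
  qed
next
  fix b :: real assume b: "1 < b"
  define \<epsilon> where "\<epsilon> = min 1 ((b - 1) / 2)"
  have e: "0 < \<epsilon>" "\<epsilon> \<le> 1" using b unfolding \<epsilon>_def by auto
  have "\<epsilon> \<le> (b - 1) / 2" unfolding \<epsilon>_def by (rule min.cobounded2)
  hence e3: "1 + \<epsilon> < b" using b by argo
  note e = e e3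
  show "eventually (\<lambda>t. f (Finv f (u t)) / g t < b) at_top"
    using iii_upper[OF psi e(1) e(2)] eventually_gt_at_top[of 0]
  proof eventually_elim
    case (elim t)
    have "g t > 0" using gpos elim by auto
    hence "f (Finv f (u t)) / g t \<le> 1 + \<epsilon>" using elim by (simp add: divide_le_eq)
    thus ?case using e by argo
  qed
qed

end

lemma Lambda_unique:
  fixes \<beta> l :: real
  assumes beta: "\<beta> > 1" and l: "l > 0"
  shows "\<exists>!\<Lambda>. 0 < \<Lambda> \<and> \<Lambda> < 1 \<and> (1 - \<Lambda>) * \<Lambda> powr (- \<beta> / (\<beta> - 1)) = l"
proof -
  define h where "h x = (1 - x) * x powr (- \<beta> / (\<beta> - 1))" for x :: real
  have gam: "- \<beta> / (\<beta> - 1) \<le> -1" "- \<beta> / (\<beta> - 1) < 0" using beta by (auto simp: field_simps)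
  have dec: "h y < h x" if "0 < x" "x < y" "y < 1" for x y
  proof -
    have "y powr (- \<beta> / (\<beta> - 1)) < x powr (- \<beta> / (\<beta> - 1))"
      using that gam by (intro powr_less_mono2_neg) auto
    moreover have "1 - y < 1 - x" "0 < 1 - y" using that by auto
    ultimately show ?thesis unfolding h_def using that
      by (intro mult_strict_mono) auto
  qed
  define a0 where "a0 = 1 / (2 * l + 2)"
  have a0: "0 < a0" "a0 \<le> 1/2" using l unfolding a0_def by (auto simp: field_simps)
  have "a0 powr (-1) \<le> a0 powr (- \<beta> / (\<beta> - 1))"
    using a0 gam by (intro powr_mono') auto
  hence "1 / a0 \<le> a0 powr (- \<beta> / (\<beta> - 1))" using a0 by (simp add: powr_neg_one)
  moreover have "1 / a0 = 2 * l + 2" unfolding a0_def by simp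
  ultimately have "2 * l + 2 \<le> a0 powr (- \<beta> / (\<beta> - 1))" by simp
  hence "(1/2) * (2 * l + 2) \<le> (1 - a0) * a0 powr (- \<beta> / (\<beta> - 1))"
    using a0 l by (intro mult_mono) auto
  hence ha0: "l \<le> h a0" unfolding h_def by simp
  have h1: "h 1 \<le> l" unfolding h_def using l by simp
  have hc: "continuous_on {a0..1} h" unfolding h_def using a0
    by (intro continuous_intros) auto
  obtain y where y: "a0 \<le> y" "y \<le> 1" "h y = l" using IVT2'[of h 1 l a0, OF h1 ha0 _ hc] a0 by auto
  have "y \<noteq> 1" using y l unfolding h_def by auto
  hence ex: "0 < y \<and> y < 1 \<and> h y = l" using y a0 by auto
  show ?thesis
  proof (rule ex1I[of _ y])
    show "0 < y \<and> y < 1 \<and> (1 - y) * y powr (- \<beta> / (\<beta> - 1)) = l" using ex unfolding h_def by simp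
    fix z assume z: "0 < z \<and> z < 1 \<and> (1 - z) * z powr (- \<beta> / (\<beta> - 1)) = l"
    hence hz: "h z = l" unfolding h_def by simp
    show "z = y"
    proof (rule ccontr)
      assume "z \<noteq> y"
      hence "z < y \<or> y < z" by auto
      thus False using dec[of z y] dec[of y z] z ex hz by auto
    qed
  qed
qed


lemma ereal_PInf_ev:
  assumes "((\<lambda>t. ereal (h t)) \<longlongrightarrow> \<infinity>) F"
  shows "eventually (\<lambda>t. M < h t) F"
proof -
  have "\<forall>r. eventually (\<lambda>t. ereal r < ereal (h t)) F" using assms by (rule tendsto_PInfty[THEN iffD1])
  hence "eventually (\<lambda>t. ereal M < ereal (h t)) F" by (rule spec)
  thus ?thesis by simp
qed

theorem theorem6:
  fixes f g x :: "real \<Rightarrow> real" and \<xi> \<beta> \<theta> :: real and L :: ereal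
  assumes f_cont: "continuous_on UNIV f"
    and f_loclip: "\<forall>y. \<exists>e>0. \<exists>K. K-lipschitz_on (cball y e) f"
    and f0: "f 0 = 0"
    and f_sign: "\<forall>y. y \<noteq> 0 \<longrightarrow> y * f y > 0"
    and g_cont: "continuous_on {0..} g"
    and g_pos: "\<forall>t>0. g t > 0"
    and xi_pos: "\<xi> > 0"
    and x_cont: "continuous_on {0..} x"
    and x_init: "x 0 = \<xi>"
    and x_ode: "\<forall>t>0. (x has_real_derivative (- f (x t) + g t)) (at t)"
    and beta: "\<beta> > 1" and f_RV: "RV0 \<beta> f"
    and theta: "\<theta> > 0" and g_RV: "RVinf (- \<theta>) g"
    and x_lim: "(x \<longlongrightarrow> 0) at_top"
    and L_nonneg: "L \<ge> 0"
    and L_lim: "((\<lambda>t. ereal (g t / f (Finv f t))) \<longlongrightarrow> L) at_top"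
  shows "(L = 0 \<longrightarrow> ((\<lambda>t. Fint f (x t) / t) \<longlongrightarrow> 1) at_top)
       \<and> (\<forall>l. L = ereal l \<and> 0 < l \<longrightarrow>
            (\<exists>!\<Lambda>. 0 < \<Lambda> \<and> \<Lambda> < 1 \<and> (1 - \<Lambda>) * \<Lambda> powr (- \<beta> / (\<beta> - 1)) = l)
          \<and> ((\<lambda>t. Fint f (x t) / t) \<longlongrightarrow>
               (THE \<Lambda>. 0 < \<Lambda> \<and> \<Lambda> < 1 \<and> (1 - \<Lambda>) * \<Lambda> powr (- \<beta> / (\<beta> - 1)) = l)) at_top)
       \<and> (L = \<infinity> \<longrightarrow> ((\<lambda>t. f (x t) / g t) \<longlongrightarrow> 1) at_top)"
proof -
  have fpos0: "\<And>y. y > 0 \<Longrightarrow> f y > 0" using f_RV unfolding RV0_def by auto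
  have frv0: "\<And>c. c > 0 \<Longrightarrow> ((\<lambda>y. f (c * y) / f y) \<longlongrightarrow> c powr \<beta>) (at_right 0)"
    using f_RV unfolding RV0_def by auto
  have fc0: "continuous_on {0<..} f" using f_cont by (rule continuous_on_subset) auto
  interpret R: rvf f \<beta>
    by unfold_locales (use fc0 fpos0 frv0 beta in auto)
  have gpos': "\<And>t. t > 0 \<Longrightarrow> g t > 0" using g_pos by auto
  have grv': "\<And>c. c > 0 \<Longrightarrow> ((\<lambda>t. g (c * t) / g t) \<longlongrightarrow> c powr (- \<theta>)) at_top"
    using g_RV unfolding RVinf_def by auto
  have gc': "continuous_on {0<..} g" using g_cont by (rule continuous_on_subset) auto
  have xpos: "x t > 0" if t: "t \<ge> 0" for t
  proof (rule ccontr)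
    assume nt: "\<not> x t > 0"
    have t1p: "0 < t" using t nt x_init xi_pos by (cases "t = 0") auto
    have wc: "continuous_on {0..t} (\<lambda>s. - x s)"
      by (intro continuous_intros continuous_on_subset[OF x_cont]) auto
    obtain c where c: "0 < c" "c \<le> t" "- x c \<ge> 0" "\<forall>s. 0 \<le> s \<and> s < c \<longrightarrow> - x s < 0"
      using first_time[OF t1p wc] x_init xi_pos nt by auto
    have fx: "f (x c) \<le> 0"
    proof (cases "x c = 0")
      case True thus ?thesis using f0 by simp
    next
      case False
      hence "x c * f (x c) > 0" using f_sign by auto
      moreover have "x c < 0" using False c by auto
      ultimately show ?thesis by (simp add: zero_less_mult_iff)
    qed
    have der: "(x has_real_derivative (- f (x c) + g c)) (at c)" using x_ode c by auto
    have "- f (x c) + g c > 0" using fx gpos' c by (smt (verit))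
    then obtain d where d: "d > 0" "\<forall>h>0. h < d \<longrightarrow> x (c - h) < x c"
      using DERIV_pos_inc_left[OF der] by blast
    define h where "h = min (d/2) (c/2)"
    have hle: "h \<le> d/2" "h \<le> c/2" unfolding h_def by (rule min.cobounded1, rule min.cobounded2)
    have h: "h > 0" "h < d" "0 \<le> c - h" "c - h < c" using d c hle unfolding h_def by auto
    have "x (c - h) < x c" using d h by auto
    moreover have "- x (c - h) < 0" using c h by auto
    ultimately show False using c by argo
  qed
  define u where "u t = Fint f (x t)" for t
  have fxu: "f (Finv f (u t)) = f (x t)" if "t \<ge> 0" for t
    using R.Finv_F xpos[OF that] unfolding u_def by simp
  have du: "(u has_real_derivative (1 - g t / f (Finv f (u t)))) (at t)" if t: "t > 0" for t
  proof -
    have xt: "x t > 0" using xpos t by auto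
    have "((\<lambda>s. Fint f (x s)) has_real_derivative (- (1 / f (x t))) * (- f (x t) + g t)) (at t)"
      using DERIV_chain2[OF R.F_deriv[OF xt] x_ode[rule_format, OF t]] .
    moreover have "(- (1 / f (x t))) * (- f (x t) + g t) = 1 - g t / f (Finv f (u t))"
      using fxu[of t] t fpos0[OF xt] by (simp add: field_simps)
    ultimately show ?thesis unfolding u_def by simp
  qed
  have xlim': "filterlim x (at_right 0) at_top"
    unfolding filterlim_at
  proof
    show "eventually (\<lambda>t. x t \<in> {0<..} \<and> x t \<noteq> 0) at_top" unfolding eventually_at_top_linorder
    proof (intro exI[of _ 0] allI impI)
      fix t :: real assume "0 \<le> t" thus "x t \<in> {0<..} \<and> x t \<noteq> 0" using xpos[of t] by auto
    qed
    show "(x \<longlongrightarrow> 0) at_top" by (rule x_lim)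
  qed
  have ulim: "filterlim u at_top at_top"
    unfolding u_def by (rule filterlim_compose[OF R.F_inf xlim'])
  have pu_cont: "continuous_on {0<..} (\<lambda>t. f (Finv f (u t)))"
  proof -
    have "continuous_on {0<..} (\<lambda>t. f (x t))"
      by (rule continuous_on_compose2[OF f_cont continuous_on_subset[OF x_cont]]) auto
    thus ?thesis by (rule continuous_on_cong[THEN iffD1, rotated 2]) (auto simp: fxu)
  qed
  have phipos: "\<And>t. t > 0 \<Longrightarrow> f (Finv f (u t)) > 0" using fxu xpos fpos0 by auto
  interpret S: sol f \<beta> g u \<theta>
    by unfold_locales (use gc' gpos' grv' theta du phipos ulim pu_cont in auto)
  have P1: "L = 0 \<longrightarrow> ((\<lambda>t. Fint f (x t) / t) \<longlongrightarrow> 1) at_top"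
  proof
    assume L0: "L = 0"
    hence "((\<lambda>t. ereal (g t / f (Finv f t))) \<longlongrightarrow> ereal 0) at_top" using L_lim by (simp add: zero_ereal_def)
    hence "((\<lambda>t. g t / f (Finv f t)) \<longlongrightarrow> 0) at_top" by simp
    hence "((\<lambda>t. u t / t) \<longlongrightarrow> 1) at_top" by (rule S.case_i)
    thus "((\<lambda>t. Fint f (x t) / t) \<longlongrightarrow> 1) at_top" unfolding u_def .
  qed
  have P2: "\<forall>l. L = ereal l \<and> 0 < l \<longrightarrow>
            (\<exists>!\<Lambda>. 0 < \<Lambda> \<and> \<Lambda> < 1 \<and> (1 - \<Lambda>) * \<Lambda> powr (- \<beta> / (\<beta> - 1)) = l)
          \<and> ((\<lambda>t. Fint f (x t) / t) \<longlongrightarrow>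
               (THE \<Lambda>. 0 < \<Lambda> \<and> \<Lambda> < 1 \<and> (1 - \<Lambda>) * \<Lambda> powr (- \<beta> / (\<beta> - 1)) = l)) at_top"
  proof (intro allI impI)
    fix l assume hl: "L = ereal l \<and> 0 < l"
    have ex1: "\<exists>!\<Lambda>. 0 < \<Lambda> \<and> \<Lambda> < 1 \<and> (1 - \<Lambda>) * \<Lambda> powr (- \<beta> / (\<beta> - 1)) = l"
      using Lambda_unique[OF beta] hl by auto
    define r where "r = (THE \<Lambda>. 0 < \<Lambda> \<and> \<Lambda> < 1 \<and> (1 - \<Lambda>) * \<Lambda> powr (- \<beta> / (\<beta> - 1)) = l)"
    have r: "0 < r \<and> r < 1 \<and> (1 - r) * r powr (- \<beta> / (\<beta> - 1)) = l"
      unfolding r_def by (rule theI'[OF ex1])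
    have psi: "((\<lambda>t. g t / f (Finv f t)) \<longlongrightarrow> l) at_top" using L_lim hl by simp
    have "((\<lambda>t. u t / t) \<longlongrightarrow> r) at_top"
      using S.case_ii[OF psi _ ] r hl by auto
    hence tl: "((\<lambda>t. Fint f (x t) / t) \<longlongrightarrow> r) at_top" unfolding u_def .
    show "(\<exists>!\<Lambda>. 0 < \<Lambda> \<and> \<Lambda> < 1 \<and> (1 - \<Lambda>) * \<Lambda> powr (- \<beta> / (\<beta> - 1)) = l)
          \<and> ((\<lambda>t. Fint f (x t) / t) \<longlongrightarrow>
               (THE \<Lambda>. 0 < \<Lambda> \<and> \<Lambda> < 1 \<and> (1 - \<Lambda>) * \<Lambda> powr (- \<beta> / (\<beta> - 1)) = l)) at_top"
      using ex1 tl unfolding r_def by (rule conjI)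
  qed
  have P3: "L = \<infinity> \<longrightarrow> ((\<lambda>t. f (x t) / g t) \<longlongrightarrow> 1) at_top"
  proof
    assume Linf: "L = \<infinity>"
    have psi: "eventually (\<lambda>t. M < g t / f (Finv f t)) at_top" for M
      by (rule ereal_PInf_ev) (use L_lim Linf in simp)
    have "((\<lambda>t. f (Finv f (u t)) / g t) \<longlongrightarrow> 1) at_top" by (rule S.case_iii[OF psi])
    moreover have "eventually (\<lambda>t. f (Finv f (u t)) / g t = f (x t) / g t) at_top"
    proof (rule eventually_mono[OF eventually_ge_at_top[of 0]])
      fix t :: real assume "0 \<le> t" thus "f (Finv f (u t)) / g t = f (x t) / g t" using fxu[of t] by simp
    qed
    ultimately show "((\<lambda>t. f (x t) / g t) \<longlongrightarrow> 1) at_top" by (rule Lim_transform_eventually)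
  qed
  show ?thesis by (rule conjI[OF P1 conjI[OF P2 P3]])
qed


end
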